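(* Let $a_0,a_1,a_2,a_3$ be nonnegative integers satisfying $a_i+a_{i+2}\ge a_{i+1}$ for $i=-1,0,1,2$ with the convention $a_{-1}=a_4=0$, i.e. \[ a_1\ge a_0,\quad a_0+a_2\ge a_1,\quad a_1+a_3\ge a_2,\quad a_2\ge a_3. \] For a random chain complex $0\leftarrow A_0\xleftarrow{d_1}A_1\xleftarrow{d_2}A_2\xleftarrow{d_3}A_3\leftarrow 0$ with $A_i=\mathbb R^{a_i}$, almost surely \[ \beta_0+\beta_1+\beta_2+\beta_3=|\chi|,\qquad \chi=a_0-a_1+a_2-a_3. \]
   Context: Model of a random chain complex: fix nonnegative integers $\vec a=(a_0,\dots,a_n)$ and $A_i=\mathbb R^{a_i}$. A sequence of linear maps $d_i:A_i\to A_{i-1}$ ($i=1,\dots,n$) is a point of $\mathbb R^N$, $N=\sum_{i=1}^n a_{i-1}a_i$. Let $M(\vec a)\subseteq\mathbb R^N$ be the real affine algebraic variety of chain complexes ($d_i\circ d_{i+1}=0$ for all $i$); let $k$ be its Hausdorff dimension. Fix a bounded measurable probability density $f$ on $\mathbb R^N$ (e.g.\ standard Gaussian) with $\int_{M(\vec a)} f\,d\mathcal H^k>0$. For a subvariety $Y\subseteq M(\vec a)$ define $\Pr(Y)=\int_Y f\,d\mathcal H^k/\int_{M(\vec a)} f\,d\mathcal H^k$, $\mathcal H^k$ the $k$-dimensional Hausdorff measure. A random chain complex is a point of $M(\vec a)$ under this measure; "almost surely" means with probability $1$. Betti numbers: with $r_i=\operatorname{rank} d_i$ and $r_0=r_{n+1}=0$,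 $\beta_i=a_i-r_i-r_{i+1}$. Here $n=3$. *)

theory Defs
  imports "HOL-Analysis.Analysis"
begin

definition haus_const :: "real \<Rightarrow> real" where
  "haus_const s = pi powr (s / 2) / Gamma (s / 2 + 1)"

text \<open>Contribution of one covering set; empty sets contribute 0,
  and for s = 0 every nonempty set contributes 1 (convention 0^0 = 1).\<close>
definition haus_content :: "real \<Rightarrow> 'a::metric_space set \<Rightarrow> real" where
  "haus_content s C =
     (if C = {} then 0 else if s = 0 then 1
      else haus_const s * (diameter C / 2) powr s)"

definition haus_pre :: "real \<Rightarrow> real \<Rightarrow> 'a::metric_space set \<Rightarrow> ennreal" where
  "haus_pre s \<delta> A =
     (INF C \<in> {C :: nat \<Rightarrow> 'a set. A \<subseteq> (\<Union>i. C i) \<and>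
                 (\<forall>i. bounded (C i) \<and> diameter (C i) \<le> \<delta>)}.
        (\<Sum>i. ennreal (haus_content s (C i))))"

definition haus_outer :: "real \<Rightarrow> 'a::metric_space set \<Rightarrow> ennreal" where
  "haus_outer s A = (SUP \<delta> \<in> {0<..}. haus_pre s \<delta> A)"

definition hausdorff_dim :: "'a::metric_space set \<Rightarrow> real" where
  "hausdorff_dim A = Inf {s. 0 \<le> s \<and> haus_outer s A = 0}"

definition hausdorff_measure :: "real \<Rightarrow> 'a::metric_space measure" where
  "hausdorff_measure s =
     measure_of UNIV
       {A. \<forall>T. haus_outer s T = haus_outer s (T \<inter> A) + haus_outer s (T - A)}
       (haus_outer s)"

text \<open>Coordinates of R^N: triples (i, r, c) = entry (r,c) of the matrix of
  d_i : R^(a i) -> R^(a (i-1)), for 1 <= i <= n.\<close>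
definition cc_idx :: "nat \<Rightarrow> (nat \<Rightarrow> nat) \<Rightarrow> (nat \<times> nat \<times> nat) set" where
  "cc_idx n a = {(i, r, c). 1 \<le> i \<and> i \<le> n \<and> r < a (i - 1) \<and> c < a i}"

definition cc_mat ::
  "nat \<Rightarrow> (nat \<Rightarrow> nat) \<Rightarrow> ('n::finite \<Rightarrow> nat \<times> nat \<times> nat) \<Rightarrow> real^'n
    \<Rightarrow> nat \<Rightarrow> nat \<Rightarrow> nat \<Rightarrow> real" where
  "cc_mat n a e x i r c =
     (if (i, r, c) \<in> cc_idx n a then x $ (inv e (i, r, c)) else 0)"

definition cc_variety ::
  "nat \<Rightarrow> (nat \<Rightarrow> nat) \<Rightarrow> ('n::finite \<Rightarrow> nat \<times> nat \<times> nat) \<Rightarrow> (real^'n) set" where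
  "cc_variety n a e =
     {x. \<forall>i. 1 \<le> i \<and> i < n \<longrightarrow>
          (\<forall>r < a (i - 1). \<forall>c < a (i + 1).
             (\<Sum>m < a i. cc_mat n a e x i r m * cc_mat n a e x (i + 1) m c) = 0)}"

definition lin_indep_cols :: "nat \<Rightarrow> (nat \<Rightarrow> nat \<Rightarrow> real) \<Rightarrow> nat set \<Rightarrow> bool" where
  "lin_indep_cols m M S =
     (\<forall>u. (\<forall>r < m. (\<Sum>j\<in>S. u j * M r j) = 0) \<longrightarrow> (\<forall>j\<in>S. u j = 0))"

definition mat_rank :: "nat \<Rightarrow> nat \<Rightarrow> (nat \<Rightarrow> nat \<Rightarrow> real) \<Rightarrow> nat" where
  "mat_rank m k M = Max (card ` {S. S \<subseteq> {..<k} \<and> lin_indep_cols m M S})"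

definition cc_rank ::
  "nat \<Rightarrow> (nat \<Rightarrow> nat) \<Rightarrow> ('n::finite \<Rightarrow> nat \<times> nat \<times> nat) \<Rightarrow> real^'n \<Rightarrow> nat \<Rightarrow> nat" where
  "cc_rank n a e x i =
     (if 1 \<le> i \<and> i \<le> n then mat_rank (a (i - 1)) (a i) (cc_mat n a e x i) else 0)"

definition betti ::
  "nat \<Rightarrow> (nat \<Rightarrow> nat) \<Rightarrow> ('n::finite \<Rightarrow> nat \<times> nat \<times> nat) \<Rightarrow> real^'n \<Rightarrow> nat \<Rightarrow> int" where
  "betti n a e x i = int (a i) - int (cc_rank n a e x i) - int (cc_rank n a e x (i + 1))"

end

theory Submission
  imports Defs
begin


definition hcovers :: "real \<Rightarrow> 'a::metric_space set \<Rightarrow> (nat \<Rightarrow> 'a set) set" where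
  "hcovers \<delta> A = {C. A \<subseteq> (\<Union>i. C i) \<and> (\<forall>i. bounded (C i) \<and> diameter (C i) \<le> \<delta>)}"

lemma haus_pre_alt: "haus_pre s \<delta> A = (INF C \<in> hcovers \<delta> A. (\<Sum>i. ennreal (haus_content s (C i))))"
  unfolding haus_pre_def hcovers_def by simp

lemma haus_pre_le: "C \<in> hcovers \<delta> A \<Longrightarrow> haus_pre s \<delta> A \<le> (\<Sum>i. ennreal (haus_content s (C i)))"
  unfolding haus_pre_alt by (rule INF_lower)

lemma haus_pre_mono: "A \<subseteq> B \<Longrightarrow> haus_pre s \<delta> A \<le> haus_pre s \<delta> B"
  unfolding haus_pre_alt hcovers_def by (rule INF_superset_mono) auto

lemma haus_outer_mono: "A \<subseteq> B \<Longrightarrow> haus_outer s A \<le> haus_outer s B"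
  unfolding haus_outer_def by (rule SUP_mono) (use haus_pre_mono in blast)

lemma haus_pre_le_outer: "\<delta> > 0 \<Longrightarrow> haus_pre s \<delta> A \<le> haus_outer s A"
  unfolding haus_outer_def by (rule SUP_upper) auto

lemma combine_series:
  fixes f :: "nat \<Rightarrow> nat \<Rightarrow> ennreal"
  assumes "\<And>i. (\<Sum>j. f i j) \<le> b i"
  shows "(\<Sum>n. f (fst (prod_decode n)) (snd (prod_decode n))) \<le> (\<Sum>i. b i)"
proof -
  have "(\<Sum>n<N. f (fst (prod_decode n)) (snd (prod_decode n))) \<le> (\<Sum>i. b i)" for N
  proof -
    define P where "P = prod_decode ` {..<N}"
    have finP: "finite P" unfolding P_def by auto
    obtain I where I: "\<forall>p\<in>P. fst p < I \<and> snd p < I"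
    proof -
      have "finite (fst ` P \<union> snd ` P)" using finP by auto
      then obtain I where "fst ` P \<union> snd ` P \<subseteq> {..<I}"
        using finite_nat_bounded by blast
      then show ?thesis using that by auto
    qed
    have "(\<Sum>n<N. f (fst (prod_decode n)) (snd (prod_decode n))) = (\<Sum>p\<in>P. f (fst p) (snd p))"
      unfolding P_def by (subst sum.reindex) (auto intro: inj_on_subset[OF inj_prod_decode])
    also have "\<dots> \<le> (\<Sum>p\<in>{..<I}\<times>{..<I}. f (fst p) (snd p))"
      by (rule sum_mono2) (use I in auto)
    also have "\<dots> = (\<Sum>i<I. \<Sum>j<I. f i j)"
      by (simp add: sum.cartesian_product split_def)
    also have "\<dots> \<le> (\<Sum>i<I. b i)"
    proof (rule sum_mono)
      fix i
      have "(\<Sum>j<I. f i j) \<le> (\<Sum>j. f i j)" by (rule sum_le_suminf) auto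
      then show "(\<Sum>j<I. f i j) \<le> b i" using assms[of i] by simp
    qed
    also have "\<dots> \<le> (\<Sum>i. b i)" by (rule sum_le_suminf) auto
    finally show ?thesis .
  qed
  then show ?thesis unfolding suminf_eq_SUP by (rule SUP_least)
qed

lemma half_series_ennreal:
  assumes "e > 0"
  shows "(\<Sum>i. ennreal (e * (1/2)^Suc i)) = ennreal e"
proof -
  have "(\<lambda>i. e * (1/2::real)^Suc i) sums (e * 1)"
    by (rule sums_mult[OF power_half_series])
  then show ?thesis using assms by (subst suminf_ennreal_eq) auto
qed

lemma haus_pre_subadd:
  "haus_pre s \<delta> (\<Union>i. A i) \<le> (\<Sum>i. haus_pre s \<delta> (A i))"
proof (rule ennreal_le_epsilon)
  fix e :: real
  assume top: "(\<Sum>i. haus_pre s \<delta> (A i)) < top" and e: "0 < e"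
  have fin: "haus_pre s \<delta> (A i) < top" for i
    using top by (rule ennreal_suminf_lessD)
  have "\<exists>C. C \<in> hcovers \<delta> (A i) \<and>
     (\<Sum>j. ennreal (haus_content s (C j))) < haus_pre s \<delta> (A i) + ennreal (e * (1/2)^Suc i)" for i
  proof -
    have "haus_pre s \<delta> (A i) < haus_pre s \<delta> (A i) + ennreal (e * (1/2)^Suc i)"
      using fin[of i] e using ennreal_add_left_cancel_less[of "haus_pre s \<delta> (A i)" 0 "ennreal (e * (1/2)^Suc i)"] by (simp add: less_top)
    then show ?thesis unfolding haus_pre_alt[of s \<delta> "A i"] by (subst (asm) INF_less_iff) blast
  qed
  then obtain CC where CC: "\<And>i. CC i \<in> hcovers \<delta> (A i)"
    "\<And>i. (\<Sum>j. ennreal (haus_content s (CC i j))) < haus_pre s \<delta> (A i) + ennreal (e * (1/2)^Suc i)"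
    by metis
  define C where "C n = CC (fst (prod_decode n)) (snd (prod_decode n))" for n
  have "C \<in> hcovers \<delta> (\<Union>i. A i)"
  proof -
    have "x \<in> (\<Union>n. C n)" if "x \<in> A i" for x i
    proof -
      from CC(1)[of i] that obtain j where "x \<in> CC i j" unfolding hcovers_def by blast
      then have "x \<in> C (prod_encode (i, j))" unfolding C_def by simp
      then show ?thesis by blast
    qed
    moreover have "bounded (C n) \<and> diameter (C n) \<le> \<delta>" for n
      using CC(1) unfolding C_def hcovers_def by blast
    ultimately show ?thesis unfolding hcovers_def by blast
  qed
  then have "haus_pre s \<delta> (\<Union>i. A i) \<le> (\<Sum>n. ennreal (haus_content s (C n)))"
    by (rule haus_pre_le)
  also have "\<dots> \<le> (\<Sum>i. haus_pre s \<delta> (A i) + ennreal (e * (1/2)^Suc i))"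
    unfolding C_def by (rule combine_series) (use CC(2) in \<open>auto intro: less_imp_le\<close>)
  also have "\<dots> = (\<Sum>i. haus_pre s \<delta> (A i)) + (\<Sum>i. ennreal (e * (1/2)^Suc i))"
    by (rule suminf_add[symmetric]) auto
  also have "\<dots> = (\<Sum>i. haus_pre s \<delta> (A i)) + ennreal e"
    using half_series_ennreal[OF e] by simp
  finally show "haus_pre s \<delta> (\<Union>i. A i) \<le> (\<Sum>i. haus_pre s \<delta> (A i)) + ennreal e" .
qed

lemma haus_outer_subadd:
  "haus_outer s (\<Union>i. A i) \<le> (\<Sum>i. haus_outer s (A i))"
proof -
  have "haus_pre s \<delta> (\<Union>i. A i) \<le> (\<Sum>i. haus_outer s (A i))" if "\<delta> > 0" for \<delta>
  proof -
    have "haus_pre s \<delta> (\<Union>i. A i) \<le> (\<Sum>i. haus_pre s \<delta> (A i))" by (rule haus_pre_subadd)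
    also have "\<dots> \<le> (\<Sum>i. haus_outer s (A i))"
      by (rule suminf_le) (use haus_pre_le_outer that in auto)
    finally show ?thesis .
  qed
  then show ?thesis unfolding haus_outer_def[of s "\<Union>i. A i"] by (intro SUP_least) auto
qed

lemma haus_outer_null_UN:
  fixes A :: "nat \<Rightarrow> 'a::metric_space set"
  assumes "\<And>i. haus_outer s (A i) = 0"
  shows "haus_outer s (\<Union>i. A i) = 0"
  using haus_outer_subadd[of s A] assms by simp

lemma haus_outer_null_subset:
  assumes "haus_outer s B = 0" "A \<subseteq> B" shows "haus_outer s A = 0"
  using haus_outer_mono[OF assms(2), of s] assms(1) by simp

lemma haus_pre_empty: "\<delta> \<ge> 0 \<Longrightarrow> haus_pre s \<delta> ({}::'a::metric_space set) = 0"
proof -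
  assume d: "\<delta> \<ge> 0"
  have "(\<lambda>_. {}) \<in> hcovers \<delta> ({}::'a set)" using d by (auto simp: hcovers_def)
  from haus_pre_le[OF this, of s] have "haus_pre s \<delta> ({}::'a set) \<le> (\<Sum>i. ennreal (haus_content s ({}::'a set)))" by simp
  then show ?thesis by (simp add: haus_content_def)
qed

lemma haus_outer_empty: "haus_outer s {} = 0"
  unfolding haus_outer_def by (simp add: haus_pre_empty)

lemma haus_outer_Un_le:
  "haus_outer s (A \<union> B) \<le> haus_outer s A + haus_outer s B"
proof -
  define F where "F i = (if i = 0 then A else if i = 1 then B else {})" for i :: nat
  have "A \<union> B = (\<Union>i. F i)" unfolding F_def by (auto split: if_splits)
  then have "haus_outer s (A \<union> B) \<le> (\<Sum>i. haus_outer s (F i))"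
    using haus_outer_subadd by metis
  also have "\<dots> = (\<Sum>i<2. haus_outer s (F i))"
    by (rule suminf_finite) (auto simp: F_def haus_outer_empty)
  also have "\<dots> = haus_outer s A + haus_outer s B" by (simp add: F_def numeral_2_eq_2)
  finally show ?thesis .
qed

lemma haus_outer_null_Un:
  "haus_outer s A = 0 \<Longrightarrow> haus_outer s B = 0 \<Longrightarrow> haus_outer s (A \<union> B) = 0"
  using haus_outer_Un_le[of s A B] by simp

lemma haus_outer_null_finite_UN:
  assumes "finite I" "\<And>i. i \<in> I \<Longrightarrow> haus_outer s (F i) = 0"
  shows "haus_outer s (\<Union>i\<in>I. F i) = 0"
  using assms by (induction I rule: finite_induct) (auto simp: haus_outer_empty intro!: haus_outer_null_Un)

lemma haus_null_caratheodory:
  assumes "haus_outer s N = 0"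
  shows "haus_outer s T = haus_outer s (T \<inter> N) + haus_outer s (T - N)"
proof -
  have 1: "haus_outer s (T \<inter> N) = 0" using assms by (rule haus_outer_null_subset) auto
  have "haus_outer s T \<le> haus_outer s ((T - N) \<union> N)" by (rule haus_outer_mono) auto
  also have "\<dots> \<le> haus_outer s (T - N) + haus_outer s N" by (rule haus_outer_Un_le)
  finally have "haus_outer s T \<le> haus_outer s (T - N)" using assms by simp
  moreover have "haus_outer s (T - N) \<le> haus_outer s T" by (rule haus_outer_mono) auto
  ultimately show ?thesis using 1 by simp
qed

lemma haus_null_measure:
  assumes "haus_outer s N = 0"
  shows "N \<in> sets (hausdorff_measure s)" "emeasure (hausdorff_measure s) N = 0"
proof -
  let ?C = "{A. \<forall>T. haus_outer s T = haus_outer s (T \<inter> A) + haus_outer s (T - A)}"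
  have "N \<in> ?C" using haus_null_caratheodory[OF assms] by blast
  then have N: "N \<in> sigma_sets UNIV ?C" by (rule sigma_sets.Basic)
  then show "N \<in> sets (hausdorff_measure s)"
    unfolding hausdorff_measure_def by (subst sets_measure_of) auto
  show "emeasure (hausdorff_measure s) N = 0"
    unfolding hausdorff_measure_def emeasure_measure_of_conv using assms by simp
qed


definition pbox :: "'j set \<Rightarrow> ('j \<Rightarrow> real) \<Rightarrow> real \<Rightarrow> ('j \<Rightarrow> real) set" where
  "pbox J c \<rho> = PiE J (\<lambda>j. {c j - \<rho> .. c j + \<rho>})"

definition dsum :: "'j set \<Rightarrow> ('j \<Rightarrow> real) \<Rightarrow> ('j \<Rightarrow> real) \<Rightarrow> real" where
  "dsum J p q = (\<Sum>j\<in>J. \<bar>p j - q j\<bar>)"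

lemma dsum_nonneg: "dsum J p q \<ge> 0"
  unfolding dsum_def by (rule sum_nonneg) auto

lemma dsum_ge: "finite J \<Longrightarrow> j \<in> J \<Longrightarrow> \<bar>p j - q j\<bar> \<le> dsum J p q"
  unfolding dsum_def by (rule member_le_sum) auto

lemma haus_const_pos: "s \<ge> 0 \<Longrightarrow> haus_const s > 0"
  unfolding haus_const_def by (intro divide_pos_pos) auto

lemma diameter_le_metric:
  fixes S :: "'a::metric_space set"
  assumes "d \<ge> 0" "\<And>x y. x \<in> S \<Longrightarrow> y \<in> S \<Longrightarrow> dist x y \<le> d"
  shows "diameter S \<le> d"
  using assms unfolding diameter_def by (auto intro!: cSUP_least)

lemma bounded_by_dist:
  fixes S :: "'a::metric_space set"
  assumes "\<And>x y. x \<in> S \<Longrightarrow> y \<in> S \<Longrightarrow> dist x y \<le> d"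
  shows "bounded S"
proof (cases "S = {}")
  case False
  then obtain x0 where "x0 \<in> S" by blast
  then show ?thesis unfolding bounded_def using assms by blast
qed auto

lemma grid_index:
  fixes x :: real and M :: nat
  assumes "0 \<le> x" "x \<le> 1" "M \<ge> 1"
  shows "\<exists>g<M. real g \<le> x * M \<and> x * M \<le> real g + 1"
proof -
  define k where "k = nat \<lfloor>x * M\<rfloor>"
  have xm: "0 \<le> x * M" "x * M \<le> M" using assms by (auto simp: mult_le_cancel_right1)
  have k1: "real k \<le> x * M" "x * M < real k + 1" unfolding k_def using xm
    by (auto simp: of_nat_nat)
  show ?thesis
  proof (cases "k < M")
    case True then show ?thesis using k1 by (intro exI[of _ k]) auto
  next
    case False
    then have "real k \<ge> M" by auto
    then show ?thesis using k1 xm assms by (intro exI[of _ "M - 1"]) (auto simp: of_nat_diff)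
  qed
qed

lemma haus_content_le:
  assumes "s > 0" "bounded C" "diameter C \<le> h"
  shows "haus_content s C \<le> haus_const s * (h / 2) powr s"
proof -
  have d0: "0 \<le> diameter C" using assms(2) by (rule diameter_ge_0)
  have "(diameter C / 2) powr s \<le> (h / 2) powr s"
    using d0 assms by (intro powr_mono2) auto
  then show ?thesis using assms haus_const_pos[of s] d0
    by (auto simp: haus_content_def intro: mult_left_mono)
qed

lemma haus_content_nonneg: "s \<ge> 0 \<Longrightarrow> haus_content s C \<ge> 0"
  unfolding haus_content_def using haus_const_pos[of s] by auto

lemma small_image:
  fixes \<phi> :: "('j \<Rightarrow> real) \<Rightarrow> 'b::metric_space"
  assumes J: "finite J" and \<rho>: "\<rho> > 0" and L: "L \<ge> 0"
    and lip: "\<And>p q. p \<in> pbox J c \<rho> \<Longrightarrow> q \<in> pbox J c \<rho> \<Longrightarrow> dist (\<phi> p) (\<phi> q) \<le> L * dsum J p q"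
    and s: "s > real (card J)"
  shows "haus_outer s (\<phi> ` pbox J c \<rho>) = 0"
proof -
  define n where "n = card J"
  define hc where "hc = haus_const s"
  define B where "B = L * n * 2 * \<rho>"
  have s0: "s > 0" using s by (smt (verit) of_nat_0_le_iff)
  have hc0: "hc > 0" unfolding hc_def using s0 by (intro haus_const_pos) auto
  have B0: "B \<ge> 0" unfolding B_def using L \<rho> by auto
  have pre0: "haus_pre s \<delta> (\<phi> ` pbox J c \<rho>) = 0" if \<delta>: "\<delta> > 0" for \<delta>
  proof -
    have Heps: "haus_pre s \<delta> (\<phi> ` pbox J c \<rho>) \<le> 0 + ennreal \<epsilon>" if \<epsilon>: "\<epsilon> > 0" for \<epsilon>
    proof -
      define f where "f M = hc * (B/2) powr s * real M powr (real n - s)" for M :: nat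
      have "(f \<longlongrightarrow> 0) sequentially"
      proof -
        have "((\<lambda>M. real M powr (real n - s)) \<longlongrightarrow> 0) sequentially"
          by (rule tendsto_neg_powr) (use s n_def filterlim_real_sequentially in auto)
        then show ?thesis unfolding f_def by (rule tendsto_mult_right_zero)
      qed
      then have ev1: "eventually (\<lambda>M. f M < \<epsilon>) sequentially"
        using \<epsilon> by (rule order_tendstoD(2))
      have ev2: "eventually (\<lambda>M. M \<ge> nat \<lceil>B / \<delta>\<rceil> + 1) sequentially"
        by (rule eventually_ge_at_top)
      obtain M where M1: "f M < \<epsilon>" and M2: "M \<ge> nat \<lceil>B / \<delta>\<rceil> + 1"
        using eventually_happens'[OF _ eventually_conj[OF ev1 ev2]] by auto
      have Mpos: "M \<ge> 1" using M2 by auto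
      have "B / \<delta> \<le> real M" using M2 by linarith
      then have BM: "B / M \<le> \<delta>" using Mpos \<delta> by (auto simp: field_simps)
      define G where "G = PiE J (\<lambda>_. {..<M})"
      define cell where "cell g = PiE J (\<lambda>j. {c j - \<rho> + 2*\<rho>*g j/M .. c j - \<rho> + 2*\<rho>*(g j + 1)/M})"
        for g :: "'j \<Rightarrow> nat"
      have finG: "finite G" unfolding G_def using J by (intro finite_PiE) auto
      have cardG: "card G = M ^ n" unfolding G_def n_def using J by (simp add: card_PiE)
      have cell_sub: "cell g \<subseteq> pbox J c \<rho>" if "g \<in> G" for g
      proof
        fix p assume p: "p \<in> cell g"
        have "c j - \<rho> \<le> p j \<and> p j \<le> c j + \<rho>" if j: "j \<in> J" for j
        proof -
          have gj: "g j < M" using \<open>g \<in> G\<close> j unfolding G_def by auto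
          have l: "c j - \<rho> + 2*\<rho>*g j/M \<le> p j" "p j \<le> c j - \<rho> + 2*\<rho>*(g j + 1)/M"
            using p j unfolding cell_def by auto
          have "0 \<le> 2*\<rho>*g j/M" using \<rho> by auto
          moreover have "2*\<rho>*(g j + 1)/M \<le> 2*\<rho>"
          proof -
            have "real (g j + 1) \<le> real M" using gj by linarith
            then have "2*\<rho>*(g j + 1) \<le> 2*\<rho>*M" using \<rho> by (intro mult_left_mono) auto
            then show ?thesis using Mpos by (auto simp: field_simps)
          qed
          ultimately show ?thesis using l by linarith
        qed
        moreover have "p \<in> extensional J" using p unfolding cell_def by (simp add: PiE_iff)
        ultimately show "p \<in> pbox J c \<rho>" unfolding pbox_def by (auto simp: PiE_iff extensional_def)
      qed
      have cover: "pbox J c \<rho> \<subseteq> (\<Union>g\<in>G. cell g)"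
      proof
        fix p assume p: "p \<in> pbox J c \<rho>"
        have "\<forall>j\<in>J. \<exists>g<M. real g \<le> ((p j - (c j - \<rho>)) / (2*\<rho>)) * M \<and>
                   ((p j - (c j - \<rho>)) / (2*\<rho>)) * M \<le> real g + 1"
        proof
          fix j assume j: "j \<in> J"
          have "c j - \<rho> \<le> p j" "p j \<le> c j + \<rho>" using p j unfolding pbox_def by auto
          then show "\<exists>g<M. real g \<le> ((p j - (c j - \<rho>)) / (2*\<rho>)) * M \<and>
                   ((p j - (c j - \<rho>)) / (2*\<rho>)) * M \<le> real g + 1"
            using \<rho> Mpos by (intro grid_index) (auto simp: field_simps)
        qed
        then obtain g0 where g0: "\<And>j. j \<in> J \<Longrightarrow> g0 j < M \<and> real (g0 j) \<le> ((p j - (c j - \<rho>)) / (2*\<rho>)) * M \<and>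
                   ((p j - (c j - \<rho>)) / (2*\<rho>)) * M \<le> real (g0 j) + 1"
          by metis
        define g where "g = restrict g0 J"
        have "g \<in> G" unfolding g_def G_def using g0 by auto
        moreover have "p \<in> cell g"
        proof -
          have "c j - \<rho> + 2*\<rho>*g j/M \<le> p j \<and> p j \<le> c j - \<rho> + 2*\<rho>*(g j + 1)/M" if j: "j \<in> J" for j
          proof -
            have a: "real (g0 j) \<le> ((p j - (c j - \<rho>)) / (2*\<rho>)) * M"
              and b: "((p j - (c j - \<rho>)) / (2*\<rho>)) * M \<le> real (g0 j) + 1" using g0[OF j] by auto
            have a': "2*\<rho>*g0 j/M \<le> p j - (c j - \<rho>)" using a \<rho> Mpos by (auto simp: field_simps)
            have b': "p j - (c j - \<rho>) \<le> 2*\<rho>*(g0 j + 1)/M" using b \<rho> Mpos by (auto simp: field_simps)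
            show ?thesis using a' b' j unfolding g_def by auto
          qed
          moreover have "p \<in> extensional J" using p unfolding pbox_def by (simp add: PiE_iff)
          ultimately show ?thesis unfolding cell_def by (auto simp: PiE_iff extensional_def)
        qed
        ultimately show "p \<in> (\<Union>g\<in>G. cell g)" by blast
      qed
      have dcell: "dist (\<phi> p) (\<phi> q) \<le> B / M" if g: "g \<in> G" and p: "p \<in> cell g" and q: "q \<in> cell g" for g p q
      proof -
        have "\<bar>p j - q j\<bar> \<le> 2*\<rho>/M" if j: "j \<in> J" for j
        proof -
          have "c j - \<rho> + 2*\<rho>*g j/M \<le> p j" "p j \<le> c j - \<rho> + 2*\<rho>*(g j + 1)/M"
               "c j - \<rho> + 2*\<rho>*g j/M \<le> q j" "q j \<le> c j - \<rho> + 2*\<rho>*(g j + 1)/M"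
            using p q j unfolding cell_def by auto
          moreover have "2*\<rho>*(g j + 1)/M - 2*\<rho>*g j/M = 2*\<rho>/M" by (simp add: diff_divide_distrib[symmetric] algebra_simps)
          ultimately show ?thesis by linarith
        qed
        then have "dsum J p q \<le> n * (2*\<rho>/M)" unfolding dsum_def n_def
          using sum_bounded_above[of J "\<lambda>j. \<bar>p j - q j\<bar>" "2*\<rho>/M"] by auto
        then have "L * dsum J p q \<le> L * (n * (2*\<rho>/M))" using L by (rule mult_left_mono)
        also have "\<dots> = B / M" unfolding B_def by simp
        finally show ?thesis using lip[of p q] cell_sub[OF g] p q by force
      qed
      obtain h where h: "bij_betw h {0..<card G} G" using ex_bij_betw_nat_finite[OF finG] by blast
      define C where "C i = (if i < card G then \<phi> ` cell (h i) else {})" for i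
      have Cb: "bounded (C i) \<and> diameter (C i) \<le> B / M" for i
      proof (cases "i < card G")
        case True
        then have hi: "h i \<in> G" using h by (auto dest: bij_betwE)
        have "\<And>x y. x \<in> C i \<Longrightarrow> y \<in> C i \<Longrightarrow> dist x y \<le> B / M"
          using dcell[OF hi] True unfolding C_def by auto
        then show ?thesis using B0 Mpos by (auto intro!: bounded_by_dist diameter_le_metric)
      next
        case False then show ?thesis using B0 Mpos by (simp add: C_def)
      qed
      have "C \<in> hcovers \<delta> (\<phi> ` pbox J c \<rho>)"
      proof -
        have "\<phi> ` pbox J c \<rho> \<subseteq> (\<Union>i. C i)"
        proof
          fix y assume "y \<in> \<phi> ` pbox J c \<rho>"
          then obtain p where p: "p \<in> pbox J c \<rho>" "y = \<phi> p" by blast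
          then obtain g where g: "g \<in> G" "p \<in> cell g" using cover by blast
          obtain i where i: "i < card G" "h i = g" using h g(1)
            by (metis atLeastLessThan_iff bij_betw_iff_bijections)
          then show "y \<in> (\<Union>i. C i)" using p g unfolding C_def by auto
        qed
        then show ?thesis unfolding hcovers_def using Cb BM by (auto intro: order.trans)
      qed
      then have "haus_pre s \<delta> (\<phi> ` pbox J c \<rho>) \<le> (\<Sum>i. ennreal (haus_content s (C i)))"
        by (rule haus_pre_le)
      also have "\<dots> = (\<Sum>i<card G. ennreal (haus_content s (C i)))"
        by (rule suminf_finite) (auto simp: C_def haus_content_def)
      also have "\<dots> \<le> (\<Sum>i<card G. ennreal (hc * (B / M / 2) powr s))"
      proof (intro sum_mono ennreal_leI)
        fix i
        show "haus_content s (C i) \<le> hc * (B / M / 2) powr s"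
          unfolding hc_def using Cb[of i] s0 by (intro haus_content_le) auto
      qed
      also have "\<dots> = ennreal (\<Sum>i<card G. hc * (B / M / 2) powr s)"
        using hc0 by (intro sum_ennreal) auto
      also have "\<dots> = ennreal (M ^ n * (hc * (B / M / 2) powr s))"
        using cardG by simp
      also have "M ^ n * (hc * (B / M / 2) powr s) = f M"
      proof -
        have Mp: "real M > 0" using Mpos by auto
        have "(B / M / 2) = (B/2) / M" by simp
        then have e1: "(B / M / 2) powr s = (B/2) powr s / real M powr s"
          using B0 Mp by (metis powr_divide divide_nonneg_nonneg of_nat_0_le_iff zero_le_numeral)
        have e2: "real M ^ n = real M powr real n" using Mp by (simp add: powr_realpow)
        have e3: "real M powr real n / real M powr s = real M powr (real n - s)"
          by (simp add: powr_diff)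
        have "real M ^ n * (hc * (B / M / 2) powr s) = real M powr real n * (hc * ((B/2) powr s / real M powr s))"
          by (simp only: e1 e2)
        also have "\<dots> = hc * (B/2) powr s * (real M powr real n / real M powr s)"
          by (simp add: field_simps)
        also have "\<dots> = f M" unfolding f_def e3 ..
        finally show ?thesis by simp
      qed
      also have "ennreal (f M) \<le> 0 + ennreal \<epsilon>" using M1 by (simp add: ennreal_leI)
      finally show ?thesis .
    qed
    have "haus_pre s \<delta> (\<phi> ` pbox J c \<rho>) \<le> 0"
      by (rule ennreal_le_epsilon) (rule Heps)
    then show ?thesis by (metis le_zero_eq)
  qed
  show ?thesis unfolding haus_outer_def using pre0 by (intro antisym SUP_least) auto
qed


lemma content_lower:
  assumes s: "0 \<le> s" "s \<le> real n" and C: "C \<noteq> {}" "bounded C" "diameter C \<le> 1"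
  defines "\<kappa> \<equiv> (if s = 0 then 1 else haus_const s / 2 powr s)"
  shows "\<kappa> * diameter C ^ n \<le> haus_content s C"
proof -
  define d where "d = diameter C"
  have d0: "0 \<le> d" "d \<le> 1" using C unfolding d_def by (auto intro: diameter_ge_0)
  show ?thesis
  proof (cases "s = 0")
    case True
    then have "d ^ n \<le> 1" using d0 by (simp add: power_le_one)
    then show ?thesis using True C unfolding \<kappa>_def haus_content_def d_def by simp
  next
    case False
    then have sp: "s > 0" using s by auto
    have "d ^ n \<le> d powr s"
    proof (cases "d = 0")
      case True
      have "n \<ge> 1" using sp s by (cases n) auto
      then show ?thesis using True by (simp add: power_0_left)
    next
      case False
      then have "d ^ n = d powr real n" using d0 by (simp add: powr_realpow)
      also have "\<dots> \<le> d powr s" using d0 s False by (intro powr_mono') auto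
      finally show ?thesis .
    qed
    moreover have "(d / 2) powr s = d powr s / 2 powr s" using d0 by (simp add: powr_divide)
    ultimately have "haus_const s / 2 powr s * d ^ n \<le> haus_const s * (d / 2) powr s"
      using haus_const_pos[of s] sp by (auto simp: field_simps)
    then show ?thesis using False C unfolding \<kappa>_def haus_content_def d_def by simp
  qed
qed

lemma pos_image:
  fixes \<phi> :: "('j \<Rightarrow> real) \<Rightarrow> 'b::metric_space"
  assumes J: "finite J" and \<epsilon>: "\<epsilon> > 0" and K: "K > 0"
    and colip: "\<And>p q. p \<in> pbox J c \<epsilon> \<Longrightarrow> q \<in> pbox J c \<epsilon> \<Longrightarrow> dsum J p q \<le> K * dist (\<phi> p) (\<phi> q)"
    and s: "0 \<le> s" "s \<le> real (card J)"
  shows "haus_outer s (\<phi> ` pbox J c \<epsilon>) \<noteq> 0"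
proof -
  define n where "n = card J"
  define \<kappa> where "\<kappa> = (if s = 0 then 1 else haus_const s / 2 powr s)"
  have \<kappa>0: "\<kappa> > 0" unfolding \<kappa>_def using haus_const_pos[of s] s by auto
  define \<mu> where "\<mu> = PiM J (\<lambda>_. lborel :: real measure)"
  interpret product_sigma_finite "\<lambda>_. lborel :: real measure" by standard
  define X where "X = \<phi> ` pbox J c \<epsilon>"
  define \<eta> where "\<eta> = (2*\<epsilon>) ^ n / ((2*K) ^ n / \<kappa>)"
  have \<eta>0: "\<eta> > 0" unfolding \<eta>_def using \<epsilon> K \<kappa>0 by auto
  have main: "ennreal \<eta> \<le> (\<Sum>i. ennreal (haus_content s (C i)))" if C: "C \<in> hcovers 1 X" for C
  proof -
    define P where "P i = {p \<in> pbox J c \<epsilon>. \<phi> p \<in> C i}" for i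
    define pc where "pc i = (SOME p. p \<in> P i)" for i
    define Q where "Q i = (if P i = {} then {} else
        PiE J (\<lambda>j. {pc i j - K * diameter (C i) .. pc i j + K * diameter (C i)}))" for i
    have Cb: "bounded (C i)" "diameter (C i) \<le> 1" for i using C unfolding hcovers_def by auto
    have Qsets: "Q i \<in> sets \<mu>" for i
      unfolding Q_def \<mu>_def using J by (auto intro!: sets_PiM_I_finite)
    have cov: "pbox J c \<epsilon> \<subseteq> (\<Union>i. Q i)"
    proof
      fix p assume p: "p \<in> pbox J c \<epsilon>"
      then have "\<phi> p \<in> X" unfolding X_def by auto
      then obtain i where i: "\<phi> p \<in> C i" using C unfolding hcovers_def by auto
      then have pP: "p \<in> P i" using p unfolding P_def by auto
      then have Pne: "P i \<noteq> {}" by auto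
      have pcP: "pc i \<in> P i" unfolding pc_def using pP by (metis someI_ex)
      have "\<bar>p j - pc i j\<bar> \<le> K * diameter (C i)" if j: "j \<in> J" for j
      proof -
        have "\<bar>p j - pc i j\<bar> \<le> dsum J p (pc i)" using J j by (rule dsum_ge)
        also have "\<dots> \<le> K * dist (\<phi> p) (\<phi> (pc i))" using colip p pcP unfolding P_def by auto
        also have "\<dots> \<le> K * diameter (C i)"
          using K pcP i Cb(1)[of i] unfolding P_def
          by (intro mult_left_mono diameter_bounded_bound) auto
        finally show ?thesis .
      qed
      then have "\<forall>j\<in>J. p j \<in> {pc i j - K * diameter (C i) .. pc i j + K * diameter (C i)}"
        by (force simp: abs_le_iff)
      then have "p \<in> Q i" using Pne p unfolding Q_def pbox_def by (auto simp: PiE_iff)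
      then show "p \<in> (\<Union>i. Q i)" by blast
    qed
    have box_meas: "emeasure \<mu> (pbox J c \<epsilon>) = ennreal ((2*\<epsilon>) ^ n)"
    proof -
      have "emeasure \<mu> (pbox J c \<epsilon>) = (\<Prod>j\<in>J. emeasure lborel {c j - \<epsilon> .. c j + \<epsilon>})"
        unfolding \<mu>_def pbox_def using J by (subst emeasure_PiM) auto
      also have "\<dots> = (\<Prod>j\<in>J. ennreal (2*\<epsilon>))" using \<epsilon> by (intro prod.cong) auto
      also have "\<dots> = ennreal ((2*\<epsilon>) ^ n)" unfolding n_def using \<epsilon> by (simp add: prod_ennreal ennreal_power power_mult_distrib)
      finally show ?thesis .
    qed
    have Qmeas: "emeasure \<mu> (Q i) \<le> ennreal ((2*K) ^ n / \<kappa> * haus_content s (C i))" for i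
    proof (cases "P i = {}")
      case True
      then show ?thesis unfolding Q_def by simp
    next
      case False
      then have pcP: "pc i \<in> P i" unfolding pc_def by (simp add: some_in_eq)
      then have Cne: "C i \<noteq> {}" unfolding P_def by auto
      have d0: "0 \<le> diameter (C i)" using Cb(1) by (rule diameter_ge_0)
      have "emeasure \<mu> (Q i) = (\<Prod>j\<in>J. emeasure lborel {pc i j - K * diameter (C i) .. pc i j + K * diameter (C i)})"
        unfolding \<mu>_def Q_def using J False by (simp add: emeasure_PiM)
      also have "\<dots> = (\<Prod>j\<in>J. ennreal (2 * K * diameter (C i)))" using K d0 by (intro prod.cong) auto
      also have "\<dots> = ennreal ((2 * K * diameter (C i)) ^ n)" unfolding n_def using K d0 by (simp add: prod_ennreal ennreal_power power_mult_distrib)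
      also have "\<dots> \<le> ennreal ((2*K) ^ n / \<kappa> * haus_content s (C i))"
      proof (intro ennreal_leI)
        have "\<kappa> * diameter (C i) ^ n \<le> haus_content s (C i)"
          unfolding \<kappa>_def using s Cne Cb by (intro content_lower) (auto simp: n_def)
        then have "(2*K) ^ n * (\<kappa> * diameter (C i) ^ n) \<le> (2*K) ^ n * haus_content s (C i)"
          using K by (intro mult_left_mono) auto
        then show "(2 * K * diameter (C i)) ^ n \<le> (2*K) ^ n / \<kappa> * haus_content s (C i)"
          using \<kappa>0 by (simp add: field_simps power_mult_distrib)
      qed
      finally show ?thesis .
    qed
    have "ennreal ((2*\<epsilon>) ^ n) \<le> emeasure \<mu> (\<Union>i. Q i)"
      unfolding box_meas[symmetric] using cov Qsets by (intro emeasure_mono) auto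
    also have "\<dots> \<le> (\<Sum>i. emeasure \<mu> (Q i))"
      using Qsets by (intro emeasure_subadditive_countably) auto
    also have "\<dots> \<le> (\<Sum>i. ennreal ((2*K) ^ n / \<kappa>) * ennreal (haus_content s (C i)))"
    proof (intro suminf_le)
      fix i
      have "ennreal ((2*K) ^ n / \<kappa> * haus_content s (C i)) = ennreal ((2*K) ^ n / \<kappa>) * ennreal (haus_content s (C i))"
        using \<kappa>0 K haus_content_nonneg[OF s(1)] by (intro ennreal_mult) auto
      then show "emeasure \<mu> (Q i) \<le> ennreal ((2*K) ^ n / \<kappa>) * ennreal (haus_content s (C i))"
        using Qmeas[of i] by simp
    qed auto
    also have "\<dots> = ennreal ((2*K) ^ n / \<kappa>) * (\<Sum>i. ennreal (haus_content s (C i)))"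
      by simp
    finally have *: "ennreal ((2*\<epsilon>) ^ n) \<le> ennreal ((2*K) ^ n / \<kappa>) * (\<Sum>i. ennreal (haus_content s (C i)))" .
    have "ennreal ((2*K) ^ n / \<kappa>) * ennreal \<eta> = ennreal ((2*\<epsilon>) ^ n)"
      unfolding \<eta>_def using K \<kappa>0 \<epsilon> by (simp add: ennreal_mult[symmetric])
    with * have "ennreal ((2*K) ^ n / \<kappa>) * ennreal \<eta> \<le> ennreal ((2*K) ^ n / \<kappa>) * (\<Sum>i. ennreal (haus_content s (C i)))"
      by simp
    then show ?thesis using K \<kappa>0 by (subst (asm) ennreal_mult_le_mult_iff) auto
  qed
  have "ennreal \<eta> \<le> haus_pre s 1 X" unfolding haus_pre_alt by (rule INF_greatest) (rule main)
  also have "\<dots> \<le> haus_outer s X" by (rule haus_pre_le_outer) simp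
  finally show ?thesis unfolding X_def using \<eta>0 by auto
qed


definition indep_rows :: "nat set \<Rightarrow> (nat \<Rightarrow> nat \<Rightarrow> real) \<Rightarrow> nat set \<Rightarrow> bool" where
  "indep_rows R M S = (\<forall>u. (\<forall>r\<in>R. (\<Sum>j\<in>S. u j * M r j) = 0) \<longrightarrow> (\<forall>j\<in>S. u j = 0))"

lemma lin_indep_cols_rows: "lin_indep_cols m M S = indep_rows {..<m} M S"
  unfolding lin_indep_cols_def indep_rows_def by auto

lemma indep_card_le:
  assumes "finite R" "finite S" "indep_rows R M S"
  shows "card S \<le> card R"
  using assms
proof (induction R arbitrary: S M rule: finite_induct)
  case empty
  have "\<forall>j\<in>S. (1::real) = 0"
    using spec[OF empty.prems(2)[unfolded indep_rows_def], of "\<lambda>_. 1::real"] by simp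
  then have "S = {}" by auto
  then show ?case by simp
next
  case (insert \<rho> R)
  show ?case
  proof (cases "\<forall>j\<in>S. M \<rho> j = 0")
    case True
    have "indep_rows R M S"
      unfolding indep_rows_def
    proof (intro allI impI)
      fix u assume u: "\<forall>r\<in>R. (\<Sum>j\<in>S. u j * M r j) = 0"
      have "(\<Sum>j\<in>S. u j * M \<rho> j) = 0" using True by simp
      then have "\<forall>r\<in>insert \<rho> R. (\<Sum>j\<in>S. u j * M r j) = 0" using u by auto
      then show "\<forall>j\<in>S. u j = 0" using insert.prems(2) unfolding indep_rows_def by blast
    qed
    then have "card S \<le> card R" using insert by blast
    then show ?thesis using insert by simp
  next
    case False
    then obtain j0 where j0: "j0 \<in> S" "M \<rho> j0 \<noteq> 0" by blast
    define S' where "S' = S - {j0}"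
    define M' where "M' r j = M r j - (M \<rho> j / M \<rho> j0) * M r j0" for r j
    have SS': "S = insert j0 S'" "j0 \<notin> S'" "finite S'" using j0 insert.prems(1) unfolding S'_def by auto
    have "indep_rows R M' S'"
      unfolding indep_rows_def
    proof (intro allI impI)
      fix u assume u: "\<forall>r\<in>R. (\<Sum>j\<in>S'. u j * M' r j) = 0"
      define u' where "u' j = (if j = j0 then - (\<Sum>i\<in>S'. u i * M \<rho> i) / M \<rho> j0 else u j)" for j
      have "(\<Sum>j\<in>S. u' j * M r j) = 0" if r: "r \<in> insert \<rho> R" for r
      proof -
        have "(\<Sum>j\<in>S. u' j * M r j) = u' j0 * M r j0 + (\<Sum>j\<in>S'. u j * M r j)"
          using SS' unfolding u'_def by (auto intro!: sum.cong)
        also have "\<dots> = (\<Sum>j\<in>S'. u j * M' r j)"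
        proof -
          have "(\<Sum>j\<in>S'. u j * M' r j) = (\<Sum>j\<in>S'. u j * M r j) - (\<Sum>j\<in>S'. u j * M \<rho> j) / M \<rho> j0 * M r j0"
            unfolding M'_def by (simp add: algebra_simps sum_subtractf sum_distrib_left sum_distrib_right sum_divide_distrib)
          then show ?thesis unfolding u'_def by simp
        qed
        also have "\<dots> = 0"
        proof (cases "r = \<rho>")
          case True
          then show ?thesis unfolding M'_def using j0 by simp
        next
          case False
          then show ?thesis using u r by auto
        qed
        finally show ?thesis .
      qed
      then have "\<forall>j\<in>S. u' j = 0" using insert.prems(2) unfolding indep_rows_def by blast
      then show "\<forall>j\<in>S'. u j = 0"
      proof (intro ballI)
        fix j assume "\<forall>j\<in>S. u' j = 0" "j \<in> S'"
        moreover then have "j \<noteq> j0" using SS' by auto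
        ultimately show "u j = 0" using SS' unfolding u'_def by (metis insertCI)
      qed
    qed
    then have "card S' \<le> card R" using insert.IH SS'(3) by blast
    then show ?thesis using SS' insert by simp
  qed
qed

definition Umat :: "nat set \<Rightarrow> (nat \<Rightarrow> nat \<Rightarrow> real) \<Rightarrow> nat \<Rightarrow> nat \<Rightarrow> real" where
  "Umat S P t c = (if c \<in> S then (if t = c then 1 else 0) else P t c)"

definition is_basis :: "nat \<Rightarrow> nat \<Rightarrow> (nat \<Rightarrow> nat \<Rightarrow> real) \<Rightarrow> nat set \<Rightarrow> (nat \<Rightarrow> nat \<Rightarrow> real) \<Rightarrow> bool" where
  "is_basis m k M S co \<longleftrightarrow> S \<subseteq> {..<k} \<and> lin_indep_cols m M S \<and>
     (\<forall>r<m. \<forall>c<k. M r c = (\<Sum>t\<in>S. M r t * Umat S co t c))"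

lemma rank_basis:
  "\<exists>S co. is_basis m k M S co \<and> card S = mat_rank m k M"
proof -
  define F where "F = {S. S \<subseteq> {..<k} \<and> lin_indep_cols m M S}"
  have finF: "finite F" unfolding F_def by (rule finite_subset[of _ "Pow {..<k}"]) auto
  have "{} \<in> F" unfolding F_def lin_indep_cols_def by auto
  then have ne: "card ` F \<noteq> {}" by auto
  have "Max (card ` F) \<in> card ` F" using finF ne by (intro Max_in) auto
  then obtain S where S: "S \<in> F" "card S = Max (card ` F)" by auto
  have rk: "mat_rank m k M = card S" unfolding mat_rank_def S(2) F_def by simp
  have Sk: "S \<subseteq> {..<k}" and Si: "lin_indep_cols m M S" using S(1) unfolding F_def by auto
  have finS: "finite S" using Sk finite_subset by blast
  have exf: "\<exists>f. \<forall>r<m. M r c = (\<Sum>t\<in>S. M r t * f t)" if c: "c < k" "c \<notin> S" for c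
  proof -
    have "card (insert c S) > Max (card ` F)" using c finS S(2) by simp
    then have "insert c S \<notin> F" using finF by (metis Max_ge finite_imageI image_eqI not_le)
    then have "\<not> lin_indep_cols m M (insert c S)" using Sk c unfolding F_def by auto
    then obtain u where u: "\<forall>r<m. (\<Sum>j\<in>insert c S. u j * M r j) = 0" "\<exists>j\<in>insert c S. u j \<noteq> 0"
      unfolding lin_indep_cols_def by auto
    have uc: "u c \<noteq> 0"
    proof
      assume uc0: "u c = 0"
      have "\<forall>r<m. (\<Sum>j\<in>S. u j * M r j) = 0" using u(1) uc0 c finS by simp
      then have "\<forall>j\<in>S. u j = 0" using Si unfolding lin_indep_cols_def by blast
      then show False using u(2) uc0 by auto
    qed
    have "M r c = (\<Sum>t\<in>S. M r t * (- u t / u c))" if r: "r < m" for r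
    proof -
      have "u c * M r c + (\<Sum>j\<in>S. u j * M r j) = 0" using u(1) r c finS by simp
      then have "M r c = - (\<Sum>j\<in>S. u j * M r j) / u c" using uc by (simp add: field_simps)
      also have "\<dots> = (\<Sum>t\<in>S. M r t * (- u t / u c))"
        by (simp add: sum_divide_distrib sum_negf[symmetric] algebra_simps)
      finally show ?thesis .
    qed
    then show ?thesis by (intro exI[of _ "\<lambda>t. - u t / u c"]) blast
  qed
  have "\<forall>c. \<exists>g. c < k \<longrightarrow> c \<notin> S \<longrightarrow> (\<forall>r<m. M r c = (\<Sum>t\<in>S. M r t * g t))"
  proof
    fix c
    show "\<exists>g. c < k \<longrightarrow> c \<notin> S \<longrightarrow> (\<forall>r<m. M r c = (\<Sum>t\<in>S. M r t * g t))"
    proof (cases "c < k \<and> c \<notin> S")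
      case True
      then obtain g where "\<forall>r<m. M r c = (\<Sum>t\<in>S. M r t * g t)" using exf[of c] by blast
      then show ?thesis by (intro exI[of _ g]) blast
    qed auto
  qed
  from choice[OF this] obtain f where f0: "\<forall>c. c < k \<longrightarrow> c \<notin> S \<longrightarrow> (\<forall>r<m. M r c = (\<Sum>t\<in>S. M r t * f c t))"
    by blast
  have f: "\<And>c r. c < k \<Longrightarrow> c \<notin> S \<Longrightarrow> r < m \<Longrightarrow> M r c = (\<Sum>t\<in>S. M r t * f c t)"
    using f0 by simp
  define co where "co t c = f c t" for t c
  have "M r c = (\<Sum>t\<in>S. M r t * Umat S co t c)" if "r < m" "c < k" for r c
  proof (cases "c \<in> S")
    case True
    then have "(\<Sum>t\<in>S. M r t * Umat S co t c) = (\<Sum>t\<in>S. if t = c then M r t else 0)"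
      unfolding Umat_def by (intro sum.cong) auto
    also have "\<dots> = M r c" using True finS by simp
    finally show ?thesis by simp
  next
    case False
    have "(\<Sum>t\<in>S. M r t * Umat S co t c) = (\<Sum>t\<in>S. M r t * f c t)"
      unfolding Umat_def co_def using False by (intro sum.cong) auto
    then show ?thesis using f[OF that(2) False that(1)] by simp
  qed
  then have "is_basis m k M S co" unfolding is_basis_def using Sk Si by auto
  then show ?thesis using rk by (intro exI[of _ S] exI[of _ co]) simp
qed

lemma basis_card_le: "is_basis m k M S co \<Longrightarrow> card S \<le> m"
  unfolding is_basis_def lin_indep_cols_rows
  using indep_card_le[of "{..<m}" S M] finite_subset[of S "{..<k}"] by auto

lemma Umat_row_sum:
  assumes "t \<in> S" "S \<subseteq> {..<k}"
  shows "(\<Sum>j<k. Umat S P t j * N j) = N t + (\<Sum>j\<in>{..<k} - S. P t j * N j)"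
proof -
  have finS: "finite S" using assms(2) finite_subset by blast
  have "(\<Sum>j<k. Umat S P t j * N j) = (\<Sum>j\<in>{..<k} - S. Umat S P t j * N j) + (\<Sum>j\<in>S. Umat S P t j * N j)"
    using assms(2) by (intro sum.subset_diff) auto
  then have "(\<Sum>j<k. Umat S P t j * N j) = (\<Sum>j\<in>S. Umat S P t j * N j) + (\<Sum>j\<in>{..<k} - S. Umat S P t j * N j)"
    by simp
  also have "(\<Sum>j\<in>S. Umat S P t j * N j) = (\<Sum>j\<in>S. if j = t then N j else 0)"
    unfolding Umat_def by (intro sum.cong) auto
  also have "\<dots> = N t" using assms finS by simp
  also have "(\<Sum>j\<in>{..<k} - S. Umat S P t j * N j) = (\<Sum>j\<in>{..<k} - S. P t j * N j)"
    unfolding Umat_def by (intro sum.cong) auto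
  finally show ?thesis .
qed

lemma kernel_rel:
  assumes B: "is_basis m k M S co"
    and MN: "\<And>r c. r < m \<Longrightarrow> c < l \<Longrightarrow> (\<Sum>j<k. M r j * N j c) = 0"
    and t: "t \<in> S" and c: "c < l"
  shows "(\<Sum>j<k. Umat S co t j * N j c) = 0"
proof -
  have Sk: "S \<subseteq> {..<k}" and Si: "lin_indep_cols m M S"
    and fac: "\<And>r c. r < m \<Longrightarrow> c < k \<Longrightarrow> M r c = (\<Sum>t\<in>S. M r t * Umat S co t c)"
    using B unfolding is_basis_def by auto
  define u where "u t = (\<Sum>j<k. Umat S co t j * N j c)" for t
  have "(\<Sum>t\<in>S. u t * M r t) = 0" if r: "r < m" for r
  proof -
    have "(\<Sum>t\<in>S. u t * M r t) = (\<Sum>j<k. (\<Sum>t\<in>S. M r t * Umat S co t j) * N j c)"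
      unfolding u_def by (simp add: sum_distrib_left sum_distrib_right sum.swap[of _ S] algebra_simps)
    also have "\<dots> = (\<Sum>j<k. M r j * N j c)" using fac r by (intro sum.cong) auto
    also have "\<dots> = 0" using MN r c by simp
    finally show ?thesis .
  qed
  then have "\<forall>t\<in>S. u t = 0" using Si unfolding lin_indep_cols_def by blast
  then show ?thesis using t unfolding u_def by simp
qed

lemma ranks_add:
  assumes B: "is_basis m k M S co"
    and MN: "\<And>r c. r < m \<Longrightarrow> c < l \<Longrightarrow> (\<Sum>j<k. M r j * N j c) = 0"
    and S'l: "S' \<subseteq> {..<l}" and S'i: "lin_indep_cols k N S'"
  shows "card S + card S' \<le> k"
proof -
  have Sk: "S \<subseteq> {..<k}" using B unfolding is_basis_def by auto
  have finS': "finite S'" using S'l finite_subset by blast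
  define R where "R = {..<k} - S"
  have rel: "N t c = - (\<Sum>j\<in>R. co t j * N j c)" if "t \<in> S" "c < l" for t c
  proof -
    have "(\<Sum>j<k. Umat S co t j * N j c) = 0" by (rule kernel_rel[OF B]) (use MN that in auto)
    then show ?thesis using Umat_row_sum[OF that(1) Sk, of co "\<lambda>j. N j c"] unfolding R_def by simp
  qed
  have "indep_rows R N S'"
    unfolding indep_rows_def
  proof (intro allI impI)
    fix u assume u: "\<forall>r\<in>R. (\<Sum>j\<in>S'. u j * N r j) = 0"
    have "(\<Sum>j\<in>S'. u j * N r j) = 0" if r: "r < k" for r
    proof (cases "r \<in> S")
      case True
      have "(\<Sum>j\<in>S'. u j * N r j) = (\<Sum>j\<in>S'. u j * - (\<Sum>i\<in>R. co r i * N i j))"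
        using rel[OF True] S'l by (intro sum.cong) auto
      also have "\<dots> = - (\<Sum>i\<in>R. co r i * (\<Sum>j\<in>S'. u j * N i j))"
        by (simp add: sum_distrib_left sum_negf sum.swap[of _ S'] algebra_simps)
      also have "\<dots> = 0" using u by simp
      finally show ?thesis .
    next
      case False
      then show ?thesis using u r unfolding R_def by auto
    qed
    then show "\<forall>j\<in>S'. u j = 0" using S'i unfolding lin_indep_cols_def by blast
  qed
  then have "card S' \<le> card R" using finS' unfolding R_def by (intro indep_card_le) auto
  moreover have "card R = k - card S" unfolding R_def using Sk by (simp add: card_Diff_subset finite_subset)
  moreover have "card S \<le> k" using Sk by (metis card_lessThan card_mono finite_lessThan)
  ultimately show ?thesis by linarith
qed


definition rd :: "(nat \<times> nat \<times> nat) set \<Rightarrow> (nat \<times> nat \<times> nat \<Rightarrow> real) \<Rightarrow> nat \<Rightarrow> nat \<Rightarrow> nat \<Rightarrow> real" where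
  "rd J p b i j = (if (b, i, j) \<in> J then p (b, i, j) else 0)"

definition Wder :: "nat set \<Rightarrow> nat \<Rightarrow> (nat \<Rightarrow> nat \<Rightarrow> real) \<Rightarrow> (nat \<Rightarrow> nat \<Rightarrow> real) \<Rightarrow> nat \<Rightarrow> nat \<Rightarrow> real" where
  "Wder S k P F m s = (if m \<in> S then - (\<Sum>c\<in>{..<k} - S. P m c * F c s) else F m s)"

definition prodm :: "nat set \<Rightarrow> (nat \<Rightarrow> nat \<Rightarrow> real) \<Rightarrow> (nat \<Rightarrow> nat \<Rightarrow> real) \<Rightarrow> nat \<Rightarrow> nat \<Rightarrow> real" where
  "prodm S W U r c = (\<Sum>t\<in>S. W r t * U t c)"

definition Jset :: "(nat \<Rightarrow> nat) \<Rightarrow> nat set \<Rightarrow> nat set \<Rightarrow> nat set \<Rightarrow> (nat \<times> nat \<times> nat) set" where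
  "Jset a S1 S2 S3 =
     ({0} \<times> ({..<a 0} \<times> S1)) \<union> ({1} \<times> (S1 \<times> ({..<a 1} - S1))) \<union>
     ({2} \<times> (({..<a 1} - S1) \<times> S2)) \<union> ({3} \<times> (S2 \<times> ({..<a 2} - S2))) \<union>
     ({4} \<times> (({..<a 2} - S2) \<times> S3)) \<union> ({5} \<times> (S3 \<times> ({..<a 3} - S3)))"

definition cmat :: "(nat \<Rightarrow> nat) \<Rightarrow> nat set \<Rightarrow> nat set \<Rightarrow> nat set \<Rightarrow> (nat \<times> nat \<times> nat \<Rightarrow> real) \<Rightarrow> nat \<Rightarrow> nat \<Rightarrow> nat \<Rightarrow> real" where
  "cmat a S1 S2 S3 p i =
     (if i = 1 then prodm S1 (rd (Jset a S1 S2 S3) p 0) (Umat S1 (rd (Jset a S1 S2 S3) p 1))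
      else if i = 2 then prodm S2 (Wder S1 (a 1) (rd (Jset a S1 S2 S3) p 1) (rd (Jset a S1 S2 S3) p 2))
                         (Umat S2 (rd (Jset a S1 S2 S3) p 3))
      else prodm S3 (Wder S2 (a 2) (rd (Jset a S1 S2 S3) p 3) (rd (Jset a S1 S2 S3) p 4))
                         (Umat S3 (rd (Jset a S1 S2 S3) p 5)))"

definition Xmap :: "('n::finite \<Rightarrow> nat \<times> nat \<times> nat) \<Rightarrow> (nat \<Rightarrow> nat) \<Rightarrow> nat set \<Rightarrow> nat set \<Rightarrow> nat set
    \<Rightarrow> (nat \<times> nat \<times> nat \<Rightarrow> real) \<Rightarrow> real^'n" where
  "Xmap e a S1 S2 S3 p = (\<chi> k. case e k of (i, r, c) \<Rightarrow> cmat a S1 S2 S3 p i r c)"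

lemma cc_mat_Xmap:
  assumes e: "bij_betw e UNIV (cc_idx 3 a)" and y: "(i, r, c) \<in> cc_idx 3 a"
  shows "cc_mat 3 a e (Xmap e a S1 S2 S3 p) i r c = cmat a S1 S2 S3 p i r c"
proof -
  have "e (inv e (i, r, c)) = (i, r, c)" using e y by (meson bij_betw_inv_into_right)
  then show ?thesis using y unfolding cc_mat_def Xmap_def by simp
qed

lemma cc_idx_iff: "(i, r, c) \<in> cc_idx n a \<longleftrightarrow> 1 \<le> i \<and> i \<le> n \<and> r < a (i - 1) \<and> c < a i"
  unfolding cc_idx_def by simp

lemma sum_swap_mult:
  fixes f :: "'b \<Rightarrow> real"
  shows "(\<Sum>j\<in>A. (\<Sum>t\<in>B. f t * g t j) * h j) = (\<Sum>t\<in>B. f t * (\<Sum>j\<in>A. g t j * h j))"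
  by (simp add: sum_distrib_left sum_distrib_right sum.swap[of _ A] mult.assoc)

lemma Wder_zero:
  assumes "S \<subseteq> {..<k}" "t \<in> S"
  shows "(\<Sum>j<k. Umat S P t j * Wder S k P F j s) = 0"
proof -
  have "(\<Sum>j<k. Umat S P t j * Wder S k P F j s) = Wder S k P F t s + (\<Sum>j\<in>{..<k} - S. P t j * Wder S k P F j s)"
    by (rule Umat_row_sum[OF assms(2,1)])
  also have "(\<Sum>j\<in>{..<k} - S. P t j * Wder S k P F j s) = (\<Sum>j\<in>{..<k} - S. P t j * F j s)"
    unfolding Wder_def by (intro sum.cong) auto
  finally show ?thesis using assms(2) unfolding Wder_def by simp
qed

lemma complex_zero:
  assumes "S \<subseteq> {..<k}"
  shows "(\<Sum>j<k. prodm S W (Umat S P) r j * prodm S' (Wder S k P F) U2 j c) = 0"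
proof -
  have "(\<Sum>j<k. prodm S W (Umat S P) r j * prodm S' (Wder S k P F) U2 j c)
      = (\<Sum>t\<in>S. W r t * (\<Sum>j<k. Umat S P t j * prodm S' (Wder S k P F) U2 j c))"
    unfolding prodm_def[of S] by (rule sum_swap_mult)
  also have "\<dots> = (\<Sum>t\<in>S. W r t * (\<Sum>s\<in>S'. (\<Sum>j<k. Umat S P t j * Wder S k P F j s) * U2 s c))"
  proof -
    have "(\<Sum>j<k. Umat S P t j * prodm S' (Wder S k P F) U2 j c) = (\<Sum>s\<in>S'. (\<Sum>j<k. Umat S P t j * Wder S k P F j s) * U2 s c)" for t
      unfolding prodm_def
      by (simp add: sum_distrib_left sum_distrib_right sum.swap[of _ S'] mult.assoc mult.left_commute)
    then show ?thesis by simp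
  qed
  also have "\<dots> = 0" using Wder_zero[OF assms] by simp
  finally show ?thesis .
qed

lemma Xmap_in_variety:
  assumes e: "bij_betw e UNIV (cc_idx 3 a)" and S1: "S1 \<subseteq> {..<a 1}" and S2: "S2 \<subseteq> {..<a 2}"
  shows "Xmap e a S1 S2 S3 p \<in> cc_variety 3 a e"
proof -
  let ?x = "Xmap e a S1 S2 S3 p"
  let ?J = "Jset a S1 S2 S3"
  have "(\<Sum>m<a i. cc_mat 3 a e ?x i r m * cc_mat 3 a e ?x (i + 1) m c) = 0"
    if i: "1 \<le> i" "i < 3" and r: "r < a (i - 1)" and c: "c < a (i + 1)" for i r c
  proof -
    have "(\<Sum>m<a i. cc_mat 3 a e ?x i r m * cc_mat 3 a e ?x (i + 1) m c)
        = (\<Sum>m<a i. cmat a S1 S2 S3 p i r m * cmat a S1 S2 S3 p (i + 1) m c)"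
      using i r c by (intro sum.cong refl) (simp add: cc_mat_Xmap[OF e] cc_idx_iff)
    also have "\<dots> = 0"
    proof (cases "i = 1")
      case True
      then show ?thesis unfolding cmat_def using complex_zero[OF S1] by simp
    next
      case False
      then have "i = 2" using i by auto
      then show ?thesis unfolding cmat_def using complex_zero[OF S2] by (simp add: prodm_def[of S2])
    qed
    finally show ?thesis .
  qed
  then show ?thesis unfolding cc_variety_def by auto
qed


lemma kernel_rel2:
  assumes B: "is_basis m k M S co"
    and MN: "\<And>r c. r < m \<Longrightarrow> c < l \<Longrightarrow> (\<Sum>j<k. M r j * N j c) = 0"
    and t: "t \<in> S" and c: "c < l"
  shows "N t c = - (\<Sum>j\<in>{..<k} - S. co t j * N j c)"
proof -
  have Sk: "S \<subseteq> {..<k}" using B unfolding is_basis_def by auto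
  have "(\<Sum>j<k. Umat S co t j * N j c) = 0" by (rule kernel_rel[OF B]) (use MN t c in auto)
  then show ?thesis using Umat_row_sum[OF t Sk, of co "\<lambda>j. N j c"] by simp
qed

lemma basis_prod:
  assumes B: "is_basis m k M S co" and r: "r < m" and c: "c < k"
    and W: "\<And>t. t \<in> S \<Longrightarrow> W r t = M r t"
    and U: "\<And>t. t \<in> S \<Longrightarrow> c \<notin> S \<Longrightarrow> P t c = co t c"
  shows "prodm S W (Umat S P) r c = M r c"
proof -
  have "prodm S W (Umat S P) r c = (\<Sum>t\<in>S. M r t * Umat S co t c)"
    unfolding prodm_def using W U by (intro sum.cong) (auto simp: Umat_def)
  also have "\<dots> = M r c" using B r c unfolding is_basis_def by auto
  finally show ?thesis .
qed

lemma variety_rel: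
  assumes "x \<in> cc_variety 3 a e"
  shows "\<And>r c. r < a 0 \<Longrightarrow> c < a 2 \<Longrightarrow> (\<Sum>j<a 1. cc_mat 3 a e x 1 r j * cc_mat 3 a e x 2 j c) = 0"
    and "\<And>r c. r < a 1 \<Longrightarrow> c < a 3 \<Longrightarrow> (\<Sum>j<a 2. cc_mat 3 a e x 2 r j * cc_mat 3 a e x 3 j c) = 0"
proof -
  have H: "\<forall>i. 1 \<le> i \<and> i < 3 \<longrightarrow> (\<forall>r<a (i - 1). \<forall>c<a (i + 1).
             (\<Sum>m<a i. cc_mat 3 a e x i r m * cc_mat 3 a e x (i + 1) m c) = 0)"
    using assms unfolding cc_variety_def by simp
  show "(\<Sum>j<a 1. cc_mat 3 a e x 1 r j * cc_mat 3 a e x 2 j c) = 0" if "r < a 0" "c < a 2" for r c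
    using H[rule_format, of 1 r c] that by (simp add: numeral_2_eq_2)
  show "(\<Sum>j<a 2. cc_mat 3 a e x 2 r j * cc_mat 3 a e x 3 j c) = 0" if "r < a 1" "c < a 3" for r c
    using H[rule_format, of 2 r c] that by (simp add: numeral_3_eq_3 numeral_2_eq_2)
qed

lemma cover_x:
  assumes e: "bij_betw e UNIV (cc_idx 3 a)" and x: "x \<in> cc_variety 3 a e"
  shows "\<exists>S1 S2 S3 p. S1 \<subseteq> {..<a 1} \<and> S2 \<subseteq> {..<a 2} \<and> S3 \<subseteq> {..<a 3} \<and>
     card S1 = cc_rank 3 a e x 1 \<and> card S2 = cc_rank 3 a e x 2 \<and> card S3 = cc_rank 3 a e x 3 \<and>
     card S1 \<le> a 0 \<and> card S1 + card S2 \<le> a 1 \<and> card S2 + card S3 \<le> a 2 \<and> card S3 \<le> a 3 \<and>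
     x = Xmap e a S1 S2 S3 p"
proof -
  define M1 where "M1 = cc_mat 3 a e x 1"
  define M2 where "M2 = cc_mat 3 a e x 2"
  define M3 where "M3 = cc_mat 3 a e x 3"
  obtain S1 co1 where B1: "is_basis (a 0) (a 1) M1 S1 co1" and c1: "card S1 = mat_rank (a 0) (a 1) M1"
    using rank_basis by blast
  obtain S2 co2 where B2: "is_basis (a 1) (a 2) M2 S2 co2" and c2: "card S2 = mat_rank (a 1) (a 2) M2"
    using rank_basis by blast
  obtain S3 co3 where B3: "is_basis (a 2) (a 3) M3 S3 co3" and c3: "card S3 = mat_rank (a 2) (a 3) M3"
    using rank_basis by blast
  have S1: "S1 \<subseteq> {..<a 1}" and S2: "S2 \<subseteq> {..<a 2}" and S3: "S3 \<subseteq> {..<a 3}"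
    using B1 B2 B3 unfolding is_basis_def by auto
  have R1: "\<And>r c. r < a 0 \<Longrightarrow> c < a 2 \<Longrightarrow> (\<Sum>j<a 1. M1 r j * M2 j c) = 0"
    and R2: "\<And>r c. r < a 1 \<Longrightarrow> c < a 3 \<Longrightarrow> (\<Sum>j<a 2. M2 r j * M3 j c) = 0"
    using variety_rel[OF x] unfolding M1_def M2_def M3_def by auto
  have rk: "cc_rank 3 a e x 1 = card S1" "cc_rank 3 a e x 2 = card S2" "cc_rank 3 a e x 3 = card S3"
    using c1 c2 c3 unfolding cc_rank_def M1_def M2_def M3_def by (auto simp: numeral_2_eq_2 numeral_3_eq_3)
  have f1: "card S1 \<le> a 0" using B1 by (rule basis_card_le)
  have f2: "card S1 + card S2 \<le> a 1"
    using ranks_add[where N=M2 and l="a 2", OF B1 R1 S2] B2 unfolding is_basis_def by blast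
  have f3: "card S2 + card S3 \<le> a 2"
    using ranks_add[where N=M3 and l="a 3", OF B2 R2 S3] B3 unfolding is_basis_def by blast
  have f4: "card S3 \<le> a 3" using S3 by (metis card_lessThan card_mono finite_lessThan)
  define p where "p = (\<lambda>(b::nat, i::nat, j::nat). if b = 0 then M1 i j else if b = 1 then co1 i j
      else if b = 2 then M2 i j else if b = 3 then co2 i j else if b = 4 then M3 i j else co3 i j)"
  define J where "J = Jset a S1 S2 S3"
  have rd0: "rd J p 0 i t = M1 i t" if "i < a 0" "t \<in> S1" for i t
    using that unfolding rd_def J_def Jset_def p_def by auto
  have rd1: "rd J p 1 t c = co1 t c" if "t \<in> S1" "c < a 1" "c \<notin> S1" for t c
    using that unfolding rd_def J_def Jset_def p_def by auto
  have rd2: "rd J p 2 m s = M2 m s" if "m < a 1" "m \<notin> S1" "s \<in> S2" for m s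
    using that unfolding rd_def J_def Jset_def p_def by auto
  have rd3: "rd J p 3 t c = co2 t c" if "t \<in> S2" "c < a 2" "c \<notin> S2" for t c
    using that unfolding rd_def J_def Jset_def p_def by auto
  have rd4: "rd J p 4 m s = M3 m s" if "m < a 2" "m \<notin> S2" "s \<in> S3" for m s
    using that unfolding rd_def J_def Jset_def p_def by auto
  have rd5: "rd J p 5 t c = co3 t c" if "t \<in> S3" "c < a 3" "c \<notin> S3" for t c
    using that unfolding rd_def J_def Jset_def p_def by auto
  have W2: "Wder S1 (a 1) (rd J p 1) (rd J p 2) m s = M2 m s" if "m < a 1" "s \<in> S2" for m s
  proof (cases "m \<in> S1")
    case True
    have "s < a 2" using that S2 by auto
    have eqs: "rd J p 1 m c * rd J p 2 c s = co1 m c * M2 c s" if "c \<in> {..<a 1} - S1" for c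
      using rd1[of m c] rd2[of c s] True that \<open>s \<in> S2\<close> by simp
    have "Wder S1 (a 1) (rd J p 1) (rd J p 2) m s = - (\<Sum>c\<in>{..<a 1} - S1. co1 m c * M2 c s)"
      unfolding Wder_def using True eqs sum.cong[OF refl eqs] by simp
    also have "\<dots> = M2 m s" using kernel_rel2[where N=M2 and l="a 2", OF B1 R1 True \<open>s < a 2\<close>] by simp
    finally show ?thesis .
  next
    case False then show ?thesis using that rd2 unfolding Wder_def by simp
  qed
  have W3: "Wder S2 (a 2) (rd J p 3) (rd J p 4) m s = M3 m s" if "m < a 2" "s \<in> S3" for m s
  proof (cases "m \<in> S2")
    case True
    have "s < a 3" using that S3 by auto
    have eqs: "rd J p 3 m c * rd J p 4 c s = co2 m c * M3 c s" if "c \<in> {..<a 2} - S2" for c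
      using rd3[of m c] rd4[of c s] True that \<open>s \<in> S3\<close> by simp
    have "Wder S2 (a 2) (rd J p 3) (rd J p 4) m s = - (\<Sum>c\<in>{..<a 2} - S2. co2 m c * M3 c s)"
      unfolding Wder_def using True eqs sum.cong[OF refl eqs] by simp
    also have "\<dots> = M3 m s" using kernel_rel2[where N=M3 and l="a 3", OF B2 R2 True \<open>s < a 3\<close>] by simp
    finally show ?thesis .
  next
    case False then show ?thesis using that rd4 unfolding Wder_def by simp
  qed
  have cm: "cmat a S1 S2 S3 p i r c = cc_mat 3 a e x i r c" if y: "(i, r, c) \<in> cc_idx 3 a" for i r c
  proof -
    have i: "i = 1 \<or> i = 2 \<or> i = 3" and r: "r < a (i - 1)" and c: "c < a i"
      using y unfolding cc_idx_def by auto
    show ?thesis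
    proof (cases "i = 1")
      case True
      then have "cmat a S1 S2 S3 p i r c = prodm S1 (rd J p 0) (Umat S1 (rd J p 1)) r c"
        unfolding cmat_def J_def by simp
      also have "\<dots> = M1 r c" using r c True
        by (intro basis_prod[OF B1]) (auto simp: rd0 rd1[unfolded One_nat_def])
      finally show ?thesis using True unfolding M1_def by simp
    next
      case False
      show ?thesis
      proof (cases "i = 2")
        case True
        then have "cmat a S1 S2 S3 p i r c = prodm S2 (Wder S1 (a 1) (rd J p 1) (rd J p 2)) (Umat S2 (rd J p 3)) r c"
          unfolding cmat_def J_def by simp
        also have "\<dots> = M2 r c" using r c True S2
          by (intro basis_prod[OF B2]) (auto simp: W2[unfolded One_nat_def] rd3)
        finally show ?thesis using True unfolding M2_def by simp
      next
        case False
        then have i3: "i = 3" using i \<open>i \<noteq> 1\<close> by auto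
        then have "cmat a S1 S2 S3 p i r c = prodm S3 (Wder S2 (a 2) (rd J p 3) (rd J p 4)) (Umat S3 (rd J p 5)) r c"
          unfolding cmat_def J_def by simp
        also have "\<dots> = M3 r c" using r c i3 S3
          by (intro basis_prod[OF B3]) (auto simp: W3 rd5)
        finally show ?thesis using i3 unfolding M3_def by simp
      qed
    qed
  qed
  have "x = Xmap e a S1 S2 S3 p"
  proof (rule vec_eq_iff[THEN iffD2], rule allI)
    fix k
    obtain i r c where eq: "e k = (i, r, c)" by (metis prod_cases3)
    have y: "(i, r, c) \<in> cc_idx 3 a" using e eq by (metis UNIV_I bij_betwE)
    have "inv e (i, r, c) = k" using e eq by (metis bij_betw_inv_into_left UNIV_I)
    then have "x $ k = cc_mat 3 a e x i r c" unfolding cc_mat_def using y by simp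
    also have "\<dots> = cmat a S1 S2 S3 p i r c" using cm[OF y] by simp
    also have "\<dots> = Xmap e a S1 S2 S3 p $ k" unfolding Xmap_def using eq by simp
    finally show "x $ k = Xmap e a S1 S2 S3 p $ k" .
  qed
  then show ?thesis using S1 S2 S3 rk f1 f2 f3 f4 by metis
qed


definition lipb :: "'j set \<Rightarrow> ('j \<Rightarrow> real) set \<Rightarrow> (('j \<Rightarrow> real) \<Rightarrow> real) \<Rightarrow> bool" where
  "lipb J B f \<longleftrightarrow> (\<exists>L. \<forall>p\<in>B. \<forall>q\<in>B. \<bar>f p\<bar> \<le> L \<and> \<bar>f p - f q\<bar> \<le> L * dsum J p q)"

lemma lipb_const: "lipb J B (\<lambda>_. k)"
  unfolding lipb_def by (intro exI[of _ "\<bar>k\<bar>"]) (auto intro: mult_nonneg_nonneg dsum_nonneg)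

lemma lipb_coord:
  assumes "finite J" "j \<in> J" "\<And>p. p \<in> B \<Longrightarrow> \<bar>p j\<bar> \<le> R"
  shows "lipb J B (\<lambda>p. p j)"
  unfolding lipb_def
proof (intro exI[of _ "max R 1"] ballI conjI)
  fix p q assume p: "p \<in> B" and q: "q \<in> B"
  show "\<bar>p j\<bar> \<le> max R 1" using assms(3)[OF p] by auto
  have "\<bar>p j - q j\<bar> \<le> dsum J p q" using assms(1,2) by (rule dsum_ge)
  also have "\<dots> \<le> max R 1 * dsum J p q" using mult_right_mono[of 1 "max R 1" "dsum J p q"] dsum_nonneg[of J p q]
    by simp
  finally show "\<bar>p j - q j\<bar> \<le> max R 1 * dsum J p q" .
qed

lemma lipb_add:
  assumes "lipb J B f" "lipb J B g" shows "lipb J B (\<lambda>p. f p + g p)"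
proof -
  obtain L1 where L1: "\<forall>p\<in>B. \<forall>q\<in>B. \<bar>f p\<bar> \<le> L1 \<and> \<bar>f p - f q\<bar> \<le> L1 * dsum J p q"
    using assms(1) unfolding lipb_def by blast
  obtain L2 where L2: "\<forall>p\<in>B. \<forall>q\<in>B. \<bar>g p\<bar> \<le> L2 \<and> \<bar>g p - g q\<bar> \<le> L2 * dsum J p q"
    using assms(2) unfolding lipb_def by blast
  show ?thesis unfolding lipb_def
  proof (intro exI[of _ "L1 + L2"] ballI conjI)
    fix p q assume p: "p \<in> B" and q: "q \<in> B"
    show "\<bar>f p + g p\<bar> \<le> L1 + L2" using L1 L2 p q by (smt (verit))
    have "\<bar>f p + g p - (f q + g q)\<bar> \<le> \<bar>f p - f q\<bar> + \<bar>g p - g q\<bar>" by linarith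
    also have "\<dots> \<le> L1 * dsum J p q + L2 * dsum J p q" using L1 L2 p q by (meson add_mono)
    finally show "\<bar>f p + g p - (f q + g q)\<bar> \<le> (L1 + L2) * dsum J p q" by (simp add: distrib_right)
  qed
qed

lemma lipb_uminus:
  assumes "lipb J B f" shows "lipb J B (\<lambda>p. - f p)"
  using assms unfolding lipb_def by (metis abs_minus_cancel abs_minus_commute minus_diff_minus)

lemma lipb_mult:
  assumes "lipb J B f" "lipb J B g" shows "lipb J B (\<lambda>p. f p * g p)"
proof -
  obtain L1 where L1: "\<forall>p\<in>B. \<forall>q\<in>B. \<bar>f p\<bar> \<le> L1 \<and> \<bar>f p - f q\<bar> \<le> L1 * dsum J p q"
    using assms(1) unfolding lipb_def by blast
  obtain L2 where L2: "\<forall>p\<in>B. \<forall>q\<in>B. \<bar>g p\<bar> \<le> L2 \<and> \<bar>g p - g q\<bar> \<le> L2 * dsum J p q"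
    using assms(2) unfolding lipb_def by blast
  show ?thesis unfolding lipb_def
  proof (intro exI[of _ "2 * \<bar>L1\<bar> * \<bar>L2\<bar>"] ballI conjI)
    fix p q assume p: "p \<in> B" and q: "q \<in> B"
    have a: "\<bar>f p\<bar> \<le> \<bar>L1\<bar>" "\<bar>g p\<bar> \<le> \<bar>L2\<bar>" "\<bar>g q\<bar> \<le> \<bar>L2\<bar>" using L1 L2 p q by force+
    have d: "\<bar>f p - f q\<bar> \<le> \<bar>L1\<bar> * dsum J p q" "\<bar>g p - g q\<bar> \<le> \<bar>L2\<bar> * dsum J p q"
      using L1 L2 p q dsum_nonneg[of J p q] by (meson abs_ge_self mult_right_mono order_trans)+
    have "\<bar>f p * g p\<bar> \<le> \<bar>L1\<bar> * \<bar>L2\<bar>" using a by (simp add: abs_mult mult_mono)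
    also have "\<dots> \<le> 2 * \<bar>L1\<bar> * \<bar>L2\<bar>" by simp
    finally show "\<bar>f p * g p\<bar> \<le> 2 * \<bar>L1\<bar> * \<bar>L2\<bar>" .
    have "f p * g p - f q * g q = f p * (g p - g q) + g q * (f p - f q)" by (simp add: algebra_simps)
    then have "\<bar>f p * g p - f q * g q\<bar> \<le> \<bar>f p\<bar> * \<bar>g p - g q\<bar> + \<bar>g q\<bar> * \<bar>f p - f q\<bar>"
      by (simp add: abs_mult[symmetric] abs_triangle_ineq)
    also have "\<dots> \<le> \<bar>L1\<bar> * (\<bar>L2\<bar> * dsum J p q) + \<bar>L2\<bar> * (\<bar>L1\<bar> * dsum J p q)"
      using a d by (intro add_mono mult_mono) auto
    also have "\<dots> = 2 * \<bar>L1\<bar> * \<bar>L2\<bar> * dsum J p q" by (simp add: algebra_simps)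
    finally show "\<bar>f p * g p - f q * g q\<bar> \<le> 2 * \<bar>L1\<bar> * \<bar>L2\<bar> * dsum J p q" .
  qed
qed

lemma lipb_sum:
  assumes "finite I" "\<And>i. i \<in> I \<Longrightarrow> lipb J B (f i)"
  shows "lipb J B (\<lambda>p. \<Sum>i\<in>I. f i p)"
  using assms by (induction I rule: finite_induct) (auto intro: lipb_const lipb_add)

lemma lipb_rd:
  assumes "finite J" "\<And>p j. p \<in> B \<Longrightarrow> j \<in> J \<Longrightarrow> \<bar>p j\<bar> \<le> R"
  shows "lipb J B (\<lambda>p. rd J p b i j)"
proof (cases "(b, i, j) \<in> J")
  case True
  have "lipb J B (\<lambda>p. p (b, i, j))" by (rule lipb_coord[OF assms(1) True]) (rule assms(2), auto simp: True)
  then show ?thesis unfolding rd_def using True by simp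
next
  case False
  then show ?thesis unfolding rd_def by (simp add: lipb_const)
qed

lemma lipb_Umat:
  assumes "\<And>t c. lipb J B (\<lambda>p. P p t c)"
  shows "lipb J B (\<lambda>p. Umat S (P p) t c)"
  unfolding Umat_def using assms by (cases "c \<in> S") (auto intro: lipb_const)

lemma lipb_Wder:
  assumes "finite S" "\<And>t c. lipb J B (\<lambda>p. P p t c)" "\<And>t c. lipb J B (\<lambda>p. F p t c)"
  shows "lipb J B (\<lambda>p. Wder S k (P p) (F p) m s)"
  unfolding Wder_def using assms
  by (cases "m \<in> S") (auto intro!: lipb_uminus lipb_sum lipb_mult)

lemma lipb_prodm:
  assumes "finite S" "\<And>t c. lipb J B (\<lambda>p. W p t c)" "\<And>t c. lipb J B (\<lambda>p. U p t c)"
  shows "lipb J B (\<lambda>p. prodm S (W p) (U p) r c)"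
  unfolding prodm_def using assms by (auto intro!: lipb_sum lipb_mult)

lemma finite_Jset: "finite S1 \<Longrightarrow> finite S2 \<Longrightarrow> finite S3 \<Longrightarrow> finite (Jset a S1 S2 S3)"
  unfolding Jset_def by auto

lemma lipb_cmat:
  assumes fin: "finite S1" "finite S2" "finite S3"
    and bnd: "\<And>p j. p \<in> B \<Longrightarrow> j \<in> Jset a S1 S2 S3 \<Longrightarrow> \<bar>p j\<bar> \<le> R"
  shows "lipb (Jset a S1 S2 S3) B (\<lambda>p. cmat a S1 S2 S3 p i r c)"
proof -
  have J: "finite (Jset a S1 S2 S3)" using fin by (rule finite_Jset)
  have rdl: "lipb (Jset a S1 S2 S3) B (\<lambda>p. rd (Jset a S1 S2 S3) p b t c)" for b t c
    by (rule lipb_rd[OF J], rule bnd)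
  consider "i = 1" | "i = 2" | "i \<noteq> 1" "i \<noteq> 2" by blast
  then show ?thesis
  proof cases
    case 1
    then show ?thesis unfolding cmat_def using fin
      by simp (intro lipb_prodm lipb_Umat rdl)
  next
    case 2
    then show ?thesis unfolding cmat_def using fin
      by simp (intro lipb_prodm lipb_Umat lipb_Wder rdl)
  next
    case 3
    then show ?thesis unfolding cmat_def using fin
      by simp (intro lipb_prodm lipb_Umat lipb_Wder rdl)
  qed
qed

lemma Xmap_lip:
  assumes fin: "finite S1" "finite S2" "finite S3"
    and bnd: "\<And>p j. p \<in> B \<Longrightarrow> j \<in> Jset a S1 S2 S3 \<Longrightarrow> \<bar>p j\<bar> \<le> R"
  shows "\<exists>L\<ge>0. \<forall>p\<in>B. \<forall>q\<in>B. dist (Xmap e a S1 S2 S3 p) (Xmap e a S1 S2 S3 q) \<le> L * dsum (Jset a S1 S2 S3) p q"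
proof -
  let ?J = "Jset a S1 S2 S3"
  have "\<forall>k. \<exists>L. \<forall>p\<in>B. \<forall>q\<in>B. \<bar>Xmap e a S1 S2 S3 p $ k - Xmap e a S1 S2 S3 q $ k\<bar> \<le> L * dsum ?J p q"
  proof
    fix k
    obtain i r c where eq: "e k = (i, r, c)" by (metis prod_cases3)
    have "lipb ?J B (\<lambda>p. cmat a S1 S2 S3 p i r c)" by (rule lipb_cmat[OF fin], rule bnd)
    then obtain L where L: "\<forall>p\<in>B. \<forall>q\<in>B. \<bar>cmat a S1 S2 S3 p i r c\<bar> \<le> L \<and>
        \<bar>cmat a S1 S2 S3 p i r c - cmat a S1 S2 S3 q i r c\<bar> \<le> L * dsum ?J p q"
      unfolding lipb_def by blast
    show "\<exists>L. \<forall>p\<in>B. \<forall>q\<in>B. \<bar>Xmap e a S1 S2 S3 p $ k - Xmap e a S1 S2 S3 q $ k\<bar> \<le> L * dsum ?J p q"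
      using L eq unfolding Xmap_def by (intro exI[of _ L]) auto
  qed
  then obtain Lf where Lf: "\<And>k p q. p \<in> B \<Longrightarrow> q \<in> B \<Longrightarrow>
      \<bar>Xmap e a S1 S2 S3 p $ k - Xmap e a S1 S2 S3 q $ k\<bar> \<le> Lf k * dsum ?J p q"
    by metis
  show ?thesis
  proof (intro exI[of _ "\<Sum>k\<in>UNIV. \<bar>Lf k\<bar>"] conjI ballI)
    show "0 \<le> (\<Sum>k\<in>UNIV. \<bar>Lf k\<bar>)" by (rule sum_nonneg) auto
    fix p q assume p: "p \<in> B" and q: "q \<in> B"
    have "dist (Xmap e a S1 S2 S3 p) (Xmap e a S1 S2 S3 q) = norm (Xmap e a S1 S2 S3 p - Xmap e a S1 S2 S3 q)"
      by (simp add: dist_norm)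
    also have "\<dots> \<le> (\<Sum>k\<in>UNIV. \<bar>(Xmap e a S1 S2 S3 p - Xmap e a S1 S2 S3 q) $ k\<bar>)" by (rule norm_le_l1_cart)
    also have "\<dots> \<le> (\<Sum>k\<in>UNIV. \<bar>Lf k\<bar> * dsum ?J p q)"
    proof (rule sum_mono)
      fix k
      have "\<bar>(Xmap e a S1 S2 S3 p - Xmap e a S1 S2 S3 q) $ k\<bar> \<le> Lf k * dsum ?J p q" using Lf[OF p q] by simp
      also have "\<dots> \<le> \<bar>Lf k\<bar> * dsum ?J p q" using dsum_nonneg by (intro mult_right_mono) auto
      finally show "\<bar>(Xmap e a S1 S2 S3 p - Xmap e a S1 S2 S3 q) $ k\<bar> \<le> \<bar>Lf k\<bar> * dsum ?J p q" .
    qed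
    also have "\<dots> = (\<Sum>k\<in>UNIV. \<bar>Lf k\<bar>) * dsum ?J p q" by (simp add: sum_distrib_right)
    finally show "dist (Xmap e a S1 S2 S3 p) (Xmap e a S1 S2 S3 q) \<le> (\<Sum>k\<in>UNIV. \<bar>Lf k\<bar>) * dsum ?J p q" .
  qed
qed

lemma piece_null:
  fixes e :: "'n::finite \<Rightarrow> nat \<times> nat \<times> nat"
  assumes fin: "finite S1" "finite S2" "finite S3" and s: "s > real (card (Jset a S1 S2 S3))"
  shows "haus_outer s (Xmap e a S1 S2 S3 ` pbox (Jset a S1 S2 S3) (\<lambda>_. 0) (real (Suc R))) = 0"
proof -
  let ?J = "Jset a S1 S2 S3"
  let ?B = "pbox ?J (\<lambda>_. 0) (real (Suc R))"
  have bnd: "\<bar>p j\<bar> \<le> real (Suc R)" if "p \<in> ?B" "j \<in> ?J" for p j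
    using that unfolding pbox_def by (auto simp: PiE_iff abs_le_iff)
  have "\<exists>L\<ge>0. \<forall>p\<in>?B. \<forall>q\<in>?B. dist (Xmap e a S1 S2 S3 p) (Xmap e a S1 S2 S3 q) \<le> L * dsum ?J p q"
    by (rule Xmap_lip[OF fin], rule bnd)
  then obtain L where L: "L \<ge> 0" "\<forall>p\<in>?B. \<forall>q\<in>?B. dist (Xmap e a S1 S2 S3 p) (Xmap e a S1 S2 S3 q) \<le> L * dsum ?J p q"
    by blast
  show ?thesis
    using L s by (intro small_image[OF finite_Jset[OF fin]]) auto
qed


lemma inv_est:
  fixes A A' :: "nat \<Rightarrow> nat \<Rightarrow> real" and v v' :: "nat \<Rightarrow> real"
  assumes r\<epsilon>: "real r * \<epsilon> \<le> 1/2" and \<epsilon>0: "0 \<le> \<epsilon>"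
    and A: "\<And>t s. t < r \<Longrightarrow> s < r \<Longrightarrow> \<bar>A t s - (if t = s then 1 else 0)\<bar> \<le> \<epsilon>"
    and AA: "\<And>t s. t < r \<Longrightarrow> s < r \<Longrightarrow> \<bar>A t s - A' t s\<bar> \<le> \<Delta>"
    and v': "\<And>s. s < r \<Longrightarrow> \<bar>v' s\<bar> \<le> 1"
    and W: "\<And>t. t < r \<Longrightarrow> \<bar>(\<Sum>s<r. A t s * v s) - (\<Sum>s<r. A' t s * v' s)\<bar> \<le> \<Delta>"
    and s: "s < r"
  shows "\<bar>v s - v' s\<bar> \<le> 2 * real r * (1 + real r) * \<Delta>"
proof -
  define u where "u s = v s - v' s" for s
  define U where "U = (\<Sum>s<r. \<bar>u s\<bar>)"
  have \<Delta>0: "0 \<le> \<Delta>" using AA[of s s] s by linarith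
  have w: "\<bar>\<Sum>s<r. A t s * u s\<bar> \<le> (1 + real r) * \<Delta>" if t: "t < r" for t
  proof -
    have "(\<Sum>s<r. A t s * u s) = (\<Sum>s<r. A t s * v s - A' t s * v' s - (A t s - A' t s) * v' s)"
      by (rule sum.cong) (simp_all add: u_def algebra_simps)
    also have "\<dots> = (\<Sum>s<r. A t s * v s) - (\<Sum>s<r. A' t s * v' s) - (\<Sum>s<r. (A t s - A' t s) * v' s)"
      by (simp add: sum_subtractf)
    finally have eq: "(\<Sum>s<r. A t s * u s) = (\<Sum>s<r. A t s * v s) - (\<Sum>s<r. A' t s * v' s) - (\<Sum>s<r. (A t s - A' t s) * v' s)" .
    have "\<bar>\<Sum>s<r. (A t s - A' t s) * v' s\<bar> \<le> (\<Sum>s<r. \<bar>(A t s - A' t s) * v' s\<bar>)" by (rule sum_abs)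
    also have "\<dots> \<le> (\<Sum>s<r. \<Delta>)"
    proof (rule sum_mono)
      fix s assume "s \<in> {..<r}"
      then have h: "\<bar>A t s - A' t s\<bar> \<le> \<Delta>" "\<bar>v' s\<bar> \<le> 1" using AA t v' by auto
      have "\<bar>A t s - A' t s\<bar> * \<bar>v' s\<bar> \<le> \<Delta> * 1" using h \<Delta>0 by (intro mult_mono) auto
      then show "\<bar>(A t s - A' t s) * v' s\<bar> \<le> \<Delta>" by (simp add: abs_mult)
    qed
    also have "\<dots> = real r * \<Delta>" by simp
    finally have Y: "\<bar>\<Sum>s<r. (A t s - A' t s) * v' s\<bar> \<le> real r * \<Delta>" .
    have X: "\<bar>(\<Sum>s<r. A t s * v s) - (\<Sum>s<r. A' t s * v' s)\<bar> \<le> \<Delta>" using W[OF t] .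
    have "\<bar>(\<Sum>s<r. A t s * u s)\<bar> \<le> \<bar>(\<Sum>s<r. A t s * v s) - (\<Sum>s<r. A' t s * v' s)\<bar> + \<bar>\<Sum>s<r. (A t s - A' t s) * v' s\<bar>"
      unfolding eq by (rule abs_triangle_ineq4)
    also have "\<dots> \<le> \<Delta> + real r * \<Delta>" using X Y by linarith
    also have "\<dots> = (1 + real r) * \<Delta>" by (simp add: distrib_right)
    finally show ?thesis .
  qed
  have ut: "\<bar>u t\<bar> \<le> (1 + real r) * \<Delta> + \<epsilon> * U" if t: "t < r" for t
  proof -
    have "(\<Sum>s<r. (if t = s then 1 else 0) * u s) = (\<Sum>s<r. if t = s then u s else 0)"
      by (rule sum.cong) auto
    also have "\<dots> = u t" using t by simp
    finally have d: "(\<Sum>s<r. (if t = s then 1 else 0) * u s) = u t" .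
    have "(\<Sum>s<r. A t s * u s) - (\<Sum>s<r. (A t s - (if t = s then 1 else 0)) * u s)
        = (\<Sum>s<r. A t s * u s - (A t s - (if t = s then 1 else 0)) * u s)"
      by (simp add: sum_subtractf)
    also have "\<dots> = (\<Sum>s<r. (if t = s then 1 else 0) * u s)"
      by (rule sum.cong) (simp_all add: algebra_simps)
    finally have ueq: "u t = (\<Sum>s<r. A t s * u s) - (\<Sum>s<r. (A t s - (if t = s then 1 else 0)) * u s)"
      using d by simp
    have "\<bar>\<Sum>s<r. (A t s - (if t = s then 1 else 0)) * u s\<bar> \<le> \<epsilon> * U"
    proof -
      have "\<bar>\<Sum>s<r. (A t s - (if t = s then 1 else 0)) * u s\<bar> \<le> (\<Sum>s<r. \<bar>(A t s - (if t = s then 1 else 0)) * u s\<bar>)"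
        by (rule sum_abs)
      also have "\<dots> \<le> (\<Sum>s<r. \<epsilon> * \<bar>u s\<bar>)"
      proof (rule sum_mono)
        fix s assume "s \<in> {..<r}"
        then have "\<bar>A t s - (if t = s then 1 else 0)\<bar> \<le> \<epsilon>" using A t by auto
        then show "\<bar>(A t s - (if t = s then 1 else 0)) * u s\<bar> \<le> \<epsilon> * \<bar>u s\<bar>"
          unfolding abs_mult by (intro mult_right_mono) auto
      qed
      also have "\<dots> = \<epsilon> * U" unfolding U_def by (simp add: sum_distrib_left)
      finally show ?thesis .
    qed
    then show ?thesis using w[OF t] ueq abs_triangle_ineq4[of "\<Sum>s<r. A t s * u s" "\<Sum>s<r. (A t s - (if t = s then 1 else 0)) * u s"]
      by linarith
  qed
  have "U \<le> (\<Sum>t<r. (1 + real r) * \<Delta> + \<epsilon> * U)"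
  proof -
    have "U = (\<Sum>t<r. \<bar>u t\<bar>)" by (simp add: U_def)
    also have "\<dots> \<le> (\<Sum>t<r. (1 + real r) * \<Delta> + \<epsilon> * U)" by (rule sum_mono) (use ut in auto)
    finally show ?thesis .
  qed
  also have "\<dots> = real r * (1 + real r) * \<Delta> + (real r * \<epsilon>) * U" by (simp add: algebra_simps)
  finally have "U \<le> real r * (1 + real r) * \<Delta> + (real r * \<epsilon>) * U" .
  moreover have "(real r * \<epsilon>) * U \<le> 1/2 * U" using r\<epsilon> by (intro mult_right_mono) (auto simp: U_def)
  ultimately have "U \<le> 2 * real r * (1 + real r) * \<Delta>" by linarith
  moreover have "\<bar>u s\<bar> \<le> U" unfolding U_def using s by (intro member_le_sum) auto
  ultimately show ?thesis unfolding u_def by linarith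
qed

definition Dn :: "(nat \<Rightarrow> nat) \<Rightarrow> nat \<Rightarrow> nat \<Rightarrow> nat \<Rightarrow> nat" where
  "Dn a r1 r2 r3 = a 0 * r1 + r1 * (a 1 - r1) + (a 1 - r1) * r2 + r2 * (a 2 - r2) + (a 2 - r2) * r3 + r3 * (a 3 - r3)"

lemma card_Jset:
  assumes "S1 \<subseteq> {..<a 1}" "S2 \<subseteq> {..<a 2}" "S3 \<subseteq> {..<a 3}"
  shows "card (Jset a S1 S2 S3) = Dn a (card S1) (card S2) (card S3)"
proof -
  have f: "finite S1" "finite S2" "finite S3" using assms finite_subset by blast+
  have c: "card ({..<a 1} - S1) = a 1 - card S1" "card ({..<a 2} - S2) = a 2 - card S2"
    "card ({..<a 3} - S3) = a 3 - card S3" using assms f by (auto simp: card_Diff_subset)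
  show ?thesis unfolding Jset_def Dn_def using f
    by (simp add: card_Un_disjoint card_cartesian_product c c[unfolded One_nat_def] disjoint_iff)
qed


context
  fixes a :: "nat \<Rightarrow> nat" and r1 r2 r3 :: nat
  assumes feas: "r1 \<le> a 0" "r1 + r2 \<le> a 1" "r2 + r3 \<le> a 2" "r3 \<le> a 3"
begin

abbreviation "GJ \<equiv> Jset a {..<r1} {..<r2} {..<r3}"
abbreviation "gm p \<equiv> cmat a {..<r1} {..<r2} {..<r3} p"

lemma GJ_iff: "(b, i, j) \<in> GJ \<longleftrightarrow>
   (b = 0 \<and> i < a 0 \<and> j < r1) \<or> (b = 1 \<and> i < r1 \<and> r1 \<le> j \<and> j < a 1) \<or>
   (b = 2 \<and> r1 \<le> i \<and> i < a 1 \<and> j < r2) \<or> (b = 3 \<and> i < r2 \<and> r2 \<le> j \<and> j < a 2) \<or>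
   (b = 4 \<and> r2 \<le> i \<and> i < a 2 \<and> j < r3) \<or> (b = 5 \<and> i < r3 \<and> r3 \<le> j \<and> j < a 3)"
  unfolding Jset_def by auto

lemma F0: "t < a 0 \<Longrightarrow> s < r1 \<Longrightarrow> gm p 1 t s = p (0, t, s)"
proof -
  assume t: "t < a 0" and s: "s < r1"
  have "gm p 1 t s = (\<Sum>t'<r1. rd GJ p 0 t t' * Umat {..<r1} (rd GJ p 1) t' s)"
    unfolding cmat_def prodm_def by simp
  also have "\<dots> = (\<Sum>t'<r1. if t' = s then rd GJ p 0 t t' else 0)"
    using s by (intro sum.cong) (auto simp: Umat_def)
  also have "\<dots> = rd GJ p 0 t s" using s by simp
  also have "\<dots> = p (0, t, s)" unfolding rd_def using t s by (simp add: GJ_iff)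
  finally show ?thesis .
qed

lemma F1: "t < a 0 \<Longrightarrow> r1 \<le> c \<Longrightarrow> c < a 1 \<Longrightarrow> gm p 1 t c = (\<Sum>s<r1. p (0, t, s) * p (1, s, c))"
proof -
  assume h: "t < a 0" "r1 \<le> c" "c < a 1"
  have "gm p 1 t c = (\<Sum>s<r1. rd GJ p 0 t s * Umat {..<r1} (rd GJ p 1) s c)"
    unfolding cmat_def prodm_def by simp
  also have "\<dots> = (\<Sum>s<r1. p (0, t, s) * p (1, s, c))"
    using h by (intro sum.cong) (auto simp: Umat_def rd_def GJ_iff)
  finally show ?thesis .
qed

lemma W2g: "r1 \<le> m \<Longrightarrow> Wder {..<r1} (a 1) (rd GJ p 1) (rd GJ p 2) m s = rd GJ p 2 m s"
  unfolding Wder_def by simp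

lemma W3g: "r2 \<le> m \<Longrightarrow> Wder {..<r2} (a 2) (rd GJ p 3) (rd GJ p 4) m s = rd GJ p 4 m s"
  unfolding Wder_def by simp

lemma F2: "r1 \<le> m \<Longrightarrow> m < a 1 \<Longrightarrow> s < r2 \<Longrightarrow> gm p 2 m s = p (2, m, s)"
proof -
  assume m: "r1 \<le> m" "m < a 1" and s: "s < r2"
  have "gm p 2 m s = (\<Sum>t'<r2. rd GJ p 2 m t' * Umat {..<r2} (rd GJ p 3) t' s)"
    unfolding cmat_def prodm_def using m W2g by simp
  also have "\<dots> = (\<Sum>t'<r2. if t' = s then rd GJ p 2 m t' else 0)"
    using s by (intro sum.cong) (auto simp: Umat_def)
  also have "\<dots> = rd GJ p 2 m s" using s by simp
  also have "\<dots> = p (2, m, s)" unfolding rd_def using m s by (simp add: GJ_iff)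
  finally show ?thesis .
qed

lemma F3: "r1 \<le> m \<Longrightarrow> m < a 1 \<Longrightarrow> r2 \<le> c \<Longrightarrow> c < a 2 \<Longrightarrow> gm p 2 m c = (\<Sum>s<r2. p (2, m, s) * p (3, s, c))"
proof -
  assume h: "r1 \<le> m" "m < a 1" "r2 \<le> c" "c < a 2"
  have "gm p 2 m c = (\<Sum>s<r2. rd GJ p 2 m s * Umat {..<r2} (rd GJ p 3) s c)"
    unfolding cmat_def prodm_def using W2g h by simp
  also have "\<dots> = (\<Sum>s<r2. p (2, m, s) * p (3, s, c))"
    using h by (intro sum.cong) (auto simp: Umat_def rd_def GJ_iff)
  finally show ?thesis .
qed

lemma F4: "r2 \<le> m \<Longrightarrow> m < a 2 \<Longrightarrow> s < r3 \<Longrightarrow> gm p 3 m s = p (4, m, s)"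
proof -
  assume m: "r2 \<le> m" "m < a 2" and s: "s < r3"
  have "gm p 3 m s = (\<Sum>t'<r3. rd GJ p 4 m t' * Umat {..<r3} (rd GJ p 5) t' s)"
    unfolding cmat_def prodm_def using m W3g by simp
  also have "\<dots> = (\<Sum>t'<r3. if t' = s then rd GJ p 4 m t' else 0)"
    using s by (intro sum.cong) (auto simp: Umat_def)
  also have "\<dots> = rd GJ p 4 m s" using s by simp
  also have "\<dots> = p (4, m, s)" unfolding rd_def using m s by (simp add: GJ_iff)
  finally show ?thesis .
qed

lemma F5: "r2 \<le> m \<Longrightarrow> m < a 2 \<Longrightarrow> r3 \<le> c \<Longrightarrow> c < a 3 \<Longrightarrow> gm p 3 m c = (\<Sum>s<r3. p (4, m, s) * p (5, s, c))"
proof -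
  assume h: "r2 \<le> m" "m < a 2" "r3 \<le> c" "c < a 3"
  have "gm p 3 m c = (\<Sum>s<r3. rd GJ p 4 m s * Umat {..<r3} (rd GJ p 5) s c)"
    unfolding cmat_def prodm_def using W3g h by simp
  also have "\<dots> = (\<Sum>s<r3. p (4, m, s) * p (5, s, c))"
    using h by (intro sum.cong) (auto simp: Umat_def rd_def GJ_iff)
  finally show ?thesis .
qed

definition "gc = (\<lambda>(b::nat, i::nat, j::nat). if b = 0 \<and> i = j then 1::real else if b = 2 \<and> i = r1 + j then 1
                      else if b = 4 \<and> i = r2 + j then 1 else 0)"
definition "g\<epsilon> = 1 / (2 * (real (r1 + r2 + r3) + 1))"
definition "gK = 2 * real (r1 + r2 + r3) * (1 + real (r1 + r2 + r3)) + 1"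

lemma g\<epsilon>: "0 < g\<epsilon>" "g\<epsilon> \<le> 1" "real r1 * g\<epsilon> \<le> 1/2" "real r2 * g\<epsilon> \<le> 1/2" "real r3 * g\<epsilon> \<le> 1/2"
  unfolding g\<epsilon>_def by (auto simp: field_simps)

lemma gK: "2 * real r1 * (1 + real r1) \<le> gK" "2 * real r2 * (1 + real r2) \<le> gK"
  "2 * real r3 * (1 + real r3) \<le> gK" "1 \<le> gK"
proof -
  have m: "2 * real r * (1 + real r) \<le> 2 * real (r1 + r2 + r3) * (1 + real (r1 + r2 + r3))"
    if "r \<le> r1 + r2 + r3" for r
    using that by (intro mult_mono) auto
  show "2 * real r1 * (1 + real r1) \<le> gK" "2 * real r2 * (1 + real r2) \<le> gK"
    "2 * real r3 * (1 + real r3) \<le> gK" unfolding gK_def using m[of r1] m[of r2] m[of r3] by auto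
  show "1 \<le> gK" unfolding gK_def by simp
qed

lemma gen_colip:
  fixes e :: "'n::finite \<Rightarrow> nat \<times> nat \<times> nat"
  assumes e: "bij_betw e UNIV (cc_idx 3 a)"
    and p: "p \<in> pbox GJ gc g\<epsilon>" and q: "q \<in> pbox GJ gc g\<epsilon>"
  shows "dsum GJ p q \<le> (real (card GJ) * gK + 1) *
           dist (Xmap e a {..<r1} {..<r2} {..<r3} p) (Xmap e a {..<r1} {..<r2} {..<r3} q)"
proof -
  define \<Delta> where "\<Delta> = dist (Xmap e a {..<r1} {..<r2} {..<r3} p) (Xmap e a {..<r1} {..<r2} {..<r3} q)"
  have \<Delta>0: "0 \<le> \<Delta>" unfolding \<Delta>_def by simp
  have ent: "\<bar>gm p i r c - gm q i r c\<bar> \<le> \<Delta>" if y: "(i, r, c) \<in> cc_idx 3 a" for i r c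
  proof -
    define k where "k = inv e (i, r, c)"
    have ek: "e k = (i, r, c)" unfolding k_def using e y by (meson bij_betw_inv_into_right)
    have "(Xmap e a {..<r1} {..<r2} {..<r3} p - Xmap e a {..<r1} {..<r2} {..<r3} q) $ k = gm p i r c - gm q i r c"
      unfolding Xmap_def using ek by simp
    then show ?thesis unfolding \<Delta>_def dist_norm by (metis component_le_norm_cart)
  qed
  have bp: "\<bar>p j - gc j\<bar> \<le> g\<epsilon>" "\<bar>q j - gc j\<bar> \<le> g\<epsilon>" if "j \<in> GJ" for j
    using p q that unfolding pbox_def by (auto simp: PiE_iff abs_le_iff)
  have gc0: "gc (0, t, s) = (if t = s then 1 else 0)" for t s unfolding gc_def by simp
  have gc1: "b \<noteq> 0 \<Longrightarrow> b \<noteq> 2 \<Longrightarrow> b \<noteq> 4 \<Longrightarrow> gc (b, t, s) = 0" for b t s unfolding gc_def by auto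
  have gc2: "gc (2, r1 + t, s) = (if t = s then 1 else 0)" for t s unfolding gc_def by simp
  have gc4: "gc (4, r2 + t, s) = (if t = s then 1 else 0)" for t s unfolding gc_def by simp
  have B0: "\<bar>p (0, t, s) - q (0, t, s)\<bar> \<le> \<Delta>" if "t < a 0" "s < r1" for t s
    using ent[of 1 t s] F0[OF that, of p] F0[OF that, of q] that feas by (simp add: cc_idx_iff)
  have B2: "\<bar>p (2, m, s) - q (2, m, s)\<bar> \<le> \<Delta>" if "r1 \<le> m" "m < a 1" "s < r2" for m s
    using ent[of 2 m s] F2[OF that, of p] F2[OF that, of q] that feas by (simp add: cc_idx_iff)
  have B4: "\<bar>p (4, m, s) - q (4, m, s)\<bar> \<le> \<Delta>" if "r2 \<le> m" "m < a 2" "s < r3" for m s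
    using ent[of 3 m s] F4[OF that, of p] F4[OF that, of q] that feas by (simp add: cc_idx_iff numeral_3_eq_3 numeral_2_eq_2)
  have B1: "\<bar>p (1, s, c) - q (1, s, c)\<bar> \<le> gK * \<Delta>" if "s < r1" "r1 \<le> c" "c < a 1" for s c
  proof -
    have "\<bar>p (1, s, c) - q (1, s, c)\<bar> \<le> 2 * real r1 * (1 + real r1) * \<Delta>"
    proof (rule inv_est[where A="\<lambda>t s. p (0, t, s)" and A'="\<lambda>t s. q (0, t, s)" and v="\<lambda>s. p (1, s, c)" and v'="\<lambda>s. q (1, s, c)"])
      show "real r1 * g\<epsilon> \<le> 1/2" "0 \<le> g\<epsilon>" using g\<epsilon> by auto
      show "\<bar>p (0, t, s') - (if t = s' then 1 else 0)\<bar> \<le> g\<epsilon>" if "t < r1" "s' < r1" for t s'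
        using bp(1)[of "(0, t, s')"] that feas by (simp add: GJ_iff gc0)
      show "\<bar>p (0, t, s') - q (0, t, s')\<bar> \<le> \<Delta>" if "t < r1" "s' < r1" for t s'
        using B0 that feas by simp
      show "\<bar>q (1, s', c)\<bar> \<le> 1" if "s' < r1" for s'
        using bp(2)[of "(1, s', c)"] that \<open>r1 \<le> c\<close> \<open>c < a 1\<close> g\<epsilon> by (simp add: GJ_iff gc1)
      show "\<bar>(\<Sum>s'<r1. p (0, t, s') * p (1, s', c)) - (\<Sum>s'<r1. q (0, t, s') * q (1, s', c))\<bar> \<le> \<Delta>" if "t < r1" for t
        using ent[of 1 t c] F1[of t c p] F1[of t c q] that \<open>r1 \<le> c\<close> \<open>c < a 1\<close> feas by (simp add: cc_idx_iff)
    qed (rule \<open>s < r1\<close>)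
    also have "\<dots> \<le> gK * \<Delta>" using gK \<Delta>0 by (intro mult_right_mono) auto
    finally show ?thesis .
  qed
  have B3: "\<bar>p (3, s, c) - q (3, s, c)\<bar> \<le> gK * \<Delta>" if "s < r2" "r2 \<le> c" "c < a 2" for s c
  proof -
    have "\<bar>p (3, s, c) - q (3, s, c)\<bar> \<le> 2 * real r2 * (1 + real r2) * \<Delta>"
    proof (rule inv_est[where A="\<lambda>t s. p (2, r1 + t, s)" and A'="\<lambda>t s. q (2, r1 + t, s)" and v="\<lambda>s. p (3, s, c)" and v'="\<lambda>s. q (3, s, c)"])
      show "real r2 * g\<epsilon> \<le> 1/2" "0 \<le> g\<epsilon>" using g\<epsilon> by auto
      show "\<bar>p (2, r1 + t, s') - (if t = s' then 1 else 0)\<bar> \<le> g\<epsilon>" if "t < r2" "s' < r2" for t s'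
        using bp(1)[of "(2, r1 + t, s')"] that feas by (simp add: GJ_iff gc2)
      show "\<bar>p (2, r1 + t, s') - q (2, r1 + t, s')\<bar> \<le> \<Delta>" if "t < r2" "s' < r2" for t s'
        using B2 that feas by simp
      show "\<bar>q (3, s', c)\<bar> \<le> 1" if "s' < r2" for s'
        using bp(2)[of "(3, s', c)"] that \<open>r2 \<le> c\<close> \<open>c < a 2\<close> g\<epsilon> by (simp add: GJ_iff gc1)
      show "\<bar>(\<Sum>s'<r2. p (2, r1 + t, s') * p (3, s', c)) - (\<Sum>s'<r2. q (2, r1 + t, s') * q (3, s', c))\<bar> \<le> \<Delta>" if "t < r2" for t
        using ent[of 2 "r1 + t" c] F3[of "r1 + t" c p] F3[of "r1 + t" c q] that \<open>r2 \<le> c\<close> \<open>c < a 2\<close> feas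
        by (simp add: cc_idx_iff)
    qed (rule \<open>s < r2\<close>)
    also have "\<dots> \<le> gK * \<Delta>" using gK \<Delta>0 by (intro mult_right_mono) auto
    finally show ?thesis .
  qed
  have B5: "\<bar>p (5, s, c) - q (5, s, c)\<bar> \<le> gK * \<Delta>" if "s < r3" "r3 \<le> c" "c < a 3" for s c
  proof -
    have "\<bar>p (5, s, c) - q (5, s, c)\<bar> \<le> 2 * real r3 * (1 + real r3) * \<Delta>"
    proof (rule inv_est[where A="\<lambda>t s. p (4, r2 + t, s)" and A'="\<lambda>t s. q (4, r2 + t, s)" and v="\<lambda>s. p (5, s, c)" and v'="\<lambda>s. q (5, s, c)"])
      show "real r3 * g\<epsilon> \<le> 1/2" "0 \<le> g\<epsilon>" using g\<epsilon> by auto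
      show "\<bar>p (4, r2 + t, s') - (if t = s' then 1 else 0)\<bar> \<le> g\<epsilon>" if "t < r3" "s' < r3" for t s'
        using bp(1)[of "(4, r2 + t, s')"] that feas by (simp add: GJ_iff gc4)
      show "\<bar>p (4, r2 + t, s') - q (4, r2 + t, s')\<bar> \<le> \<Delta>" if "t < r3" "s' < r3" for t s'
        using B4 that feas by simp
      show "\<bar>q (5, s', c)\<bar> \<le> 1" if "s' < r3" for s'
        using bp(2)[of "(5, s', c)"] that \<open>r3 \<le> c\<close> \<open>c < a 3\<close> g\<epsilon> by (simp add: GJ_iff gc1)
      show "\<bar>(\<Sum>s'<r3. p (4, r2 + t, s') * p (5, s', c)) - (\<Sum>s'<r3. q (4, r2 + t, s') * q (5, s', c))\<bar> \<le> \<Delta>" if "t < r3" for t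
        using ent[of 3 "r2 + t" c] F5[of "r2 + t" c p] F5[of "r2 + t" c q] that \<open>r3 \<le> c\<close> \<open>c < a 3\<close> feas
        by (simp add: cc_idx_iff numeral_3_eq_3 numeral_2_eq_2)
    qed (rule \<open>s < r3\<close>)
    also have "\<dots> \<le> gK * \<Delta>" using gK \<Delta>0 by (intro mult_right_mono) auto
    finally show ?thesis .
  qed
  have all: "\<bar>p j - q j\<bar> \<le> gK * \<Delta>" if j: "j \<in> GJ" for j
  proof -
    obtain b i k where jj: "j = (b, i, k)" by (metis prod_cases3)
    have D: "\<Delta> \<le> gK * \<Delta>" using gK \<Delta>0 by (metis mult_le_cancel_right1 not_le order.strict_iff_order)
    have "(b = 0 \<and> i < a 0 \<and> k < r1) \<or> (b = 1 \<and> i < r1 \<and> r1 \<le> k \<and> k < a 1) \<or>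
      (b = 2 \<and> r1 \<le> i \<and> i < a 1 \<and> k < r2) \<or> (b = 3 \<and> i < r2 \<and> r2 \<le> k \<and> k < a 2) \<or>
      (b = 4 \<and> r2 \<le> i \<and> i < a 2 \<and> k < r3) \<or> (b = 5 \<and> i < r3 \<and> r3 \<le> k \<and> k < a 3)"
      using j unfolding jj by (simp only: GJ_iff)
    then have "\<bar>p (b, i, k) - q (b, i, k)\<bar> \<le> gK * \<Delta>"
    proof (elim disjE conjE)
      assume "b = 0" "i < a 0" "k < r1" then show ?thesis using B0[of i k] D by simp
    next
      assume "b = 1" "i < r1" "r1 \<le> k" "k < a 1" then show ?thesis using B1[of i k] by simp
    next
      assume "b = 2" "r1 \<le> i" "i < a 1" "k < r2" then show ?thesis using B2[of i k] D by simp
    next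
      assume "b = 3" "i < r2" "r2 \<le> k" "k < a 2" then show ?thesis using B3[of i k] by simp
    next
      assume "b = 4" "r2 \<le> i" "i < a 2" "k < r3" then show ?thesis using B4[of i k] D by simp
    next
      assume "b = 5" "i < r3" "r3 \<le> k" "k < a 3" then show ?thesis using B5[of i k] by simp
    qed
    then show ?thesis using jj by simp
  qed
  have "dsum GJ p q \<le> real (card GJ) * (gK * \<Delta>)"
    unfolding dsum_def using all sum_bounded_above[of GJ "\<lambda>j. \<bar>p j - q j\<bar>" "gK * \<Delta>"] by auto
  also have "\<dots> \<le> (real (card GJ) * gK + 1) * \<Delta>" using \<Delta>0 by (simp add: algebra_simps)
  finally show ?thesis unfolding \<Delta>_def .
qed

lemma generic_pos:
  fixes e :: "'n::finite \<Rightarrow> nat \<times> nat \<times> nat"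
  assumes e: "bij_betw e UNIV (cc_idx 3 a)"
    and s: "0 \<le> s" "s \<le> real (Dn a r1 r2 r3)"
  shows "haus_outer s (cc_variety 3 a e) \<noteq> 0"
proof -
  have sub: "{..<r1} \<subseteq> {..<a 1}" "{..<r2} \<subseteq> {..<a 2}" "{..<r3} \<subseteq> {..<a 3}" using feas by auto
  have cJ: "card GJ = Dn a r1 r2 r3" using card_Jset[OF sub] by simp
  have finJ: "finite GJ" by (rule finite_Jset) auto
  have K: "real (card GJ) * gK + 1 > 0" using gK(4) by (smt (verit) of_nat_0_le_iff mult_nonneg_nonneg)
  have "haus_outer s (Xmap e a {..<r1} {..<r2} {..<r3} ` pbox GJ gc g\<epsilon>) \<noteq> 0"
    by (rule pos_image[OF finJ g\<epsilon>(1) K]) (use gen_colip[OF e] s cJ in auto)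
  moreover have "Xmap e a {..<r1} {..<r2} {..<r3} ` pbox GJ gc g\<epsilon> \<subseteq> cc_variety 3 a e"
    using Xmap_in_variety[OF e sub(1,2)] by auto
  ultimately show ?thesis using haus_outer_mono by (metis le_zero_eq)
qed

end


lemma Dn_int:
  assumes "r1 \<le> a 1" "r2 \<le> a 2" "r3 \<le> a 3"
  shows "int (Dn a r1 r2 r3) = int (a 0) * int r1 + int r1 * (int (a 1) - int r1) + (int (a 1) - int r1) * int r2
     + int r2 * (int (a 2) - int r2) + (int (a 2) - int r2) * int r3 + int r3 * (int (a 3) - int r3)"
  using assms unfolding Dn_def by (simp add: of_nat_diff)

definition feasible :: "(nat \<Rightarrow> nat) \<Rightarrow> nat \<Rightarrow> nat \<Rightarrow> nat \<Rightarrow> bool" where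
  "feasible a r1 r2 r3 \<longleftrightarrow> r1 \<le> a 0 \<and> r1 + r2 \<le> a 1 \<and> r2 + r3 \<le> a 2 \<and> r3 \<le> a 3"

lemma improve:
  assumes a01: "a 0 \<le> a 1" and F: "feasible a r1 r2 r3"
    and lt1: "r1 + r2 + r3 < a 0 + a 2" and lt2: "r1 + r2 + r3 < a 1 + a 3"
  shows "\<exists>r1' r2' r3'. feasible a r1' r2' r3' \<and> Dn a r1 r2 r3 < Dn a r1' r2' r3'"
proof -
  have f: "r1 \<le> a 0" "r1 + r2 \<le> a 1" "r2 + r3 \<le> a 2" "r3 \<le> a 3" using F unfolding feasible_def by auto
  have D0: "int (Dn a r1 r2 r3) = int (a 0) * int r1 + int r1 * (int (a 1) - int r1) + (int (a 1) - int r1) * int r2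
     + int r2 * (int (a 2) - int r2) + (int (a 2) - int r2) * int r3 + int r3 * (int (a 3) - int r3)"
    using f by (intro Dn_int) auto
  consider "r1 < a 0" "r1 + r2 < a 1" | "r1 + r2 < a 1" "r2 + r3 < a 2" | "r2 + r3 < a 2" "r3 < a 3"
    | "r1 < a 0" "r3 < a 3" "r1 + r2 = a 1" "r2 + r3 = a 2"
    using f lt1 lt2 by linarith
  then show ?thesis
  proof cases
    case 1
    have F': "feasible a (r1 + 1) r2 r3" using f 1 unfolding feasible_def by auto
    have "int (Dn a (r1 + 1) r2 r3) = int (a 0) * int (r1 + 1) + int (r1 + 1) * (int (a 1) - int (r1 + 1)) + (int (a 1) - int (r1 + 1)) * int r2
     + int r2 * (int (a 2) - int r2) + (int (a 2) - int r2) * int r3 + int r3 * (int (a 3) - int r3)"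
      using F' unfolding feasible_def by (intro Dn_int) auto
    then have "int (Dn a r1 r2 r3) < int (Dn a (r1 + 1) r2 r3)" using D0 1 by (simp add: algebra_simps)
    then show ?thesis using F' by (intro exI[of _ "r1 + 1"] exI[of _ r2] exI[of _ r3]) simp
  next
    case 2
    have F': "feasible a r1 (r2 + 1) r3" using f 2 unfolding feasible_def by auto
    have "int (Dn a r1 (r2 + 1) r3) = int (a 0) * int r1 + int r1 * (int (a 1) - int r1) + (int (a 1) - int r1) * int (r2 + 1)
     + int (r2 + 1) * (int (a 2) - int (r2 + 1)) + (int (a 2) - int (r2 + 1)) * int r3 + int r3 * (int (a 3) - int r3)"
      using F' unfolding feasible_def by (intro Dn_int) auto
    then have "int (Dn a r1 r2 r3) < int (Dn a r1 (r2 + 1) r3)" using D0 2 by (simp add: algebra_simps)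
    then show ?thesis using F' by (intro exI[of _ r1] exI[of _ "r2 + 1"] exI[of _ r3]) simp
  next
    case 3
    have F': "feasible a r1 r2 (r3 + 1)" using f 3 unfolding feasible_def by auto
    have "int (Dn a r1 r2 (r3 + 1)) = int (a 0) * int r1 + int r1 * (int (a 1) - int r1) + (int (a 1) - int r1) * int r2
     + int r2 * (int (a 2) - int r2) + (int (a 2) - int r2) * int (r3 + 1) + int (r3 + 1) * (int (a 3) - int (r3 + 1))"
      using F' unfolding feasible_def by (intro Dn_int) auto
    then have "int (Dn a r1 r2 r3) < int (Dn a r1 r2 (r3 + 1))" using D0 3 by (simp add: algebra_simps)
    then show ?thesis using F' by (intro exI[of _ r1] exI[of _ r2] exI[of _ "r3 + 1"]) simp
  next
    case 4
    have r2: "r2 \<ge> 1" using 4 a01 by linarith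
    have F': "feasible a (r1 + 1) (r2 - 1) (r3 + 1)" using f 4 r2 unfolding feasible_def by auto
    have "int (Dn a (r1 + 1) (r2 - 1) (r3 + 1)) = int (a 0) * int (r1 + 1) + int (r1 + 1) * (int (a 1) - int (r1 + 1)) + (int (a 1) - int (r1 + 1)) * int (r2 - 1)
     + int (r2 - 1) * (int (a 2) - int (r2 - 1)) + (int (a 2) - int (r2 - 1)) * int (r3 + 1) + int (r3 + 1) * (int (a 3) - int (r3 + 1))"
      using F' unfolding feasible_def by (intro Dn_int) auto
    then have "int (Dn a r1 r2 r3) < int (Dn a (r1 + 1) (r2 - 1) (r3 + 1))" using D0 4 r2 by (simp add: algebra_simps of_nat_diff)
    then show ?thesis using F' by (intro exI[of _ "r1 + 1"] exI[of _ "r2 - 1"] exI[of _ "r3 + 1"]) simp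
  qed
qed


lemma Xmap_restrict: "Xmap e a S1 S2 S3 (restrict p (Jset a S1 S2 S3)) = Xmap e a S1 S2 S3 p"
proof -
  have eq: "rd (Jset a S1 S2 S3) (restrict p (Jset a S1 S2 S3)) = rd (Jset a S1 S2 S3) p"
    by (auto simp: rd_def fun_eq_iff)
  show ?thesis unfolding Xmap_def cmat_def eq ..
qed

definition piece :: "('n::finite \<Rightarrow> nat \<times> nat \<times> nat) \<Rightarrow> (nat \<Rightarrow> nat) \<Rightarrow> nat set \<times> nat set \<times> nat set \<Rightarrow> nat \<Rightarrow> (real^'n) set" where
  "piece e a T R = (case T of (S1, S2, S3) \<Rightarrow>
      Xmap e a S1 S2 S3 ` pbox (Jset a S1 S2 S3) (\<lambda>_. 0) (real (Suc R)))"

lemma cover_pieces: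
  assumes e: "bij_betw e UNIV (cc_idx 3 a)" and x: "x \<in> cc_variety 3 a e"
  shows "\<exists>S1 S2 S3 R. S1 \<subseteq> {..<a 1} \<and> S2 \<subseteq> {..<a 2} \<and> S3 \<subseteq> {..<a 3} \<and>
     feasible a (card S1) (card S2) (card S3) \<and>
     card S1 = cc_rank 3 a e x 1 \<and> card S2 = cc_rank 3 a e x 2 \<and> card S3 = cc_rank 3 a e x 3 \<and>
     x \<in> piece e a (S1, S2, S3) R"
proof -
  obtain S1 S2 S3 p where H: "S1 \<subseteq> {..<a 1}" "S2 \<subseteq> {..<a 2}" "S3 \<subseteq> {..<a 3}"
     "card S1 = cc_rank 3 a e x 1" "card S2 = cc_rank 3 a e x 2" "card S3 = cc_rank 3 a e x 3"
     "card S1 \<le> a 0" "card S1 + card S2 \<le> a 1" "card S2 + card S3 \<le> a 2" "card S3 \<le> a 3"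
     "x = Xmap e a S1 S2 S3 p"
    using cover_x[OF e x] by metis
  define J where "J = Jset a S1 S2 S3"
  define R where "R = nat \<lceil>\<Sum>j\<in>J. \<bar>p j\<bar>\<rceil>"
  have finJ: "finite J" unfolding J_def using H(1-3) finite_subset by (intro finite_Jset) blast+
  have "restrict p J \<in> pbox J (\<lambda>_. 0) (real (Suc R))"
  proof -
    have bd: "\<bar>p j\<bar> \<le> real (Suc R)" if "j \<in> J" for j
    proof -
      have "\<bar>p j\<bar> \<le> (\<Sum>j\<in>J. \<bar>p j\<bar>)" using finJ that by (intro member_le_sum) auto
      also have "\<dots> \<le> real R" unfolding R_def by linarith
      finally show ?thesis by simp
    qed
    have "p j \<in> {0 - real (Suc R) .. 0 + real (Suc R)}" if "j \<in> J" for j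
      using bd[OF that] by (simp del: of_nat_Suc) arith
    then show ?thesis unfolding pbox_def by (simp add: restrict_PiE_iff)
  qed
  then have "Xmap e a S1 S2 S3 (restrict p J) \<in> Xmap e a S1 S2 S3 ` pbox J (\<lambda>_. 0) (real (Suc R))"
    by (rule imageI)
  then have "x \<in> piece e a (S1, S2, S3) R"
    unfolding piece_def using H(11) Xmap_restrict[of e a S1 S2 S3 p] unfolding J_def by simp
  then show ?thesis using H unfolding feasible_def by blast
qed

lemma null_from_cover:
  fixes e :: "'n::finite \<Rightarrow> nat \<times> nat \<times> nat"
  assumes T: "\<And>S1 S2 S3. (S1, S2, S3) \<in> \<T> \<Longrightarrow> S1 \<subseteq> {..<a 1} \<and> S2 \<subseteq> {..<a 2} \<and> S3 \<subseteq> {..<a 3}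
       \<and> real (Dn a (card S1) (card S2) (card S3)) < s"
    and Y: "Y \<subseteq> (\<Union>R. \<Union>T\<in>\<T>. piece e a T R)"
  shows "haus_outer s Y = 0"
proof -
  have finT: "finite \<T>"
  proof (rule finite_subset[of _ "Pow {..<a 1} \<times> Pow {..<a 2} \<times> Pow {..<a 3}"])
    show "\<T> \<subseteq> Pow {..<a 1} \<times> Pow {..<a 2} \<times> Pow {..<a 3}"
    proof
      fix T0 assume T0: "T0 \<in> \<T>"
      obtain S1 S2 S3 where TT: "T0 = (S1, S2, S3)" by (metis prod_cases3)
      show "T0 \<in> Pow {..<a 1} \<times> Pow {..<a 2} \<times> Pow {..<a 3}" using T[of S1 S2 S3] T0 TT by blast
    qed
  qed auto
  have "haus_outer s (piece e a T R) = 0" if "T \<in> \<T>" for T R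
  proof -
    obtain S1 S2 S3 where TT: "T = (S1, S2, S3)" by (metis prod_cases3)
    have h: "S1 \<subseteq> {..<a 1}" "S2 \<subseteq> {..<a 2}" "S3 \<subseteq> {..<a 3}" "real (Dn a (card S1) (card S2) (card S3)) < s"
      using T that TT by auto
    have fin: "finite S1" "finite S2" "finite S3" using h finite_subset by blast+
    have "real (card (Jset a S1 S2 S3)) < s" using card_Jset[OF h(1-3)] h(4) by simp
    from piece_null[OF fin this, where e=e and R=R] show ?thesis unfolding TT piece_def by simp
  qed
  then have "haus_outer s (\<Union>R. \<Union>T\<in>\<T>. piece e a T R) = 0"
    by (intro haus_outer_null_UN haus_outer_null_finite_UN[OF finT]) auto
  then show ?thesis using Y by (rule haus_outer_null_subset)
qed

lemma sum4: "(\<Sum>i\<le>(3::nat). f i) = f 0 + f 1 + f 2 + (f 3 :: int)"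
  by (simp add: eval_nat_numeral atMost_Suc)

lemma betti_sum:
  "(\<Sum>i\<le>3. betti 3 a e x i) = int (a 0) + int (a 1) + int (a 2) + int (a 3)
     - 2 * (int (cc_rank 3 a e x 1) + int (cc_rank 3 a e x 2) + int (cc_rank 3 a e x 3))"
proof -
  have z: "cc_rank 3 a e x 0 = 0" "cc_rank 3 a e x 4 = 0" unfolding cc_rank_def by auto
  show ?thesis unfolding sum4 betti_def using z by (simp add: eval_nat_numeral)
qed


theorem theorem3p3:
  fixes a :: "nat \<Rightarrow> nat"
    and e :: "'n::finite \<Rightarrow> nat \<times> nat \<times> nat"
    and f :: "real^'n \<Rightarrow> real"
  assumes "a 1 \<ge> a 0" and "a 0 + a 2 \<ge> a 1" and "a 1 + a 3 \<ge> a 2" and "a 2 \<ge> a 3"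
    and "bij_betw e UNIV (cc_idx 3 a)"
    and "f \<in> borel_measurable borel" and "\<forall>x. 0 \<le> f x" and "bounded (range f)"
    and "(\<integral>\<^sup>+ x. ennreal (f x) \<partial>lborel) = 1"
    and "(\<integral>\<^sup>+ x \<in> cc_variety 3 a e. ennreal (f x)
           \<partial>hausdorff_measure (hausdorff_dim (cc_variety 3 a e))) > 0"
  shows "{x \<in> cc_variety 3 a e.
            (\<Sum>i\<le>3. betti 3 a e x i) \<noteq> \<bar>int (a 0) - int (a 1) + int (a 2) - int (a 3)\<bar>}
           \<in> sets (hausdorff_measure (hausdorff_dim (cc_variety 3 a e)))
       \<and> (\<integral>\<^sup>+ x \<in> {x \<in> cc_variety 3 a e.
            (\<Sum>i\<le>3. betti 3 a e x i) \<noteq> \<bar>int (a 0) - int (a 1) + int (a 2) - int (a 3)\<bar>}.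
            ennreal (f x) \<partial>hausdorff_measure (hausdorff_dim (cc_variety 3 a e))) = 0"
proof -
  note a01 = assms(1) and e = assms(5)
  define V where "V = cc_variety 3 a e"
  define k where "k = hausdorff_dim V"
  define Bad where "Bad = {x \<in> cc_variety 3 a e.
            (\<Sum>i\<le>3. betti 3 a e x i) \<noteq> \<bar>int (a 0) - int (a 1) + int (a 2) - int (a 3)\<bar>}"
  define FS where "FS = {r :: nat \<times> nat \<times> nat. feasible a (fst r) (fst (snd r)) (snd (snd r))}"
  have finFS: "finite FS"
  proof (rule finite_subset[of _ "{..a 0} \<times> {..a 1} \<times> {..a 2}"])
    show "FS \<subseteq> {..a 0} \<times> {..a 1} \<times> {..a 2}" unfolding FS_def feasible_def by auto
  qed auto
  have FS0: "(0, 0, 0) \<in> FS" unfolding FS_def feasible_def by simp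
  define k0 where "k0 = Max ((\<lambda>r. Dn a (fst r) (fst (snd r)) (snd (snd r))) ` FS)"
  have k0_ge: "Dn a r1 r2 r3 \<le> k0" if "feasible a r1 r2 r3" for r1 r2 r3
    unfolding k0_def using that finFS by (intro Max_ge) (auto simp: FS_def image_iff intro!: bexI[of _ "(r1, r2, r3)"])
  obtain rs where rs: "rs \<in> FS" "Dn a (fst rs) (fst (snd rs)) (snd (snd rs)) = k0"
  proof -
    have "k0 \<in> (\<lambda>r. Dn a (fst r) (fst (snd r)) (snd (snd r))) ` FS"
      unfolding k0_def using finFS FS0 by (intro Max_in) auto
    then show ?thesis using that by blast
  qed
  have rsF: "feasible a (fst rs) (fst (snd rs)) (snd (snd rs))" using rs(1) unfolding FS_def by simp
  have lower: "haus_outer s V \<noteq> 0" if "0 \<le> s" "s < real k0" for s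
    unfolding V_def
    by (rule generic_pos[of "fst rs" a "fst (snd rs)" "snd (snd rs)"])
       (use rsF that rs(2) e in \<open>auto simp: feasible_def\<close>)
  have cover: "haus_outer s Y = 0"
    if Y: "Y \<subseteq> V" and D: "\<And>x. x \<in> Y \<Longrightarrow> \<forall>(S1::nat set) (S2::nat set) (S3::nat set). feasible a (card S1) (card S2) (card S3) \<longrightarrow>
          card S1 = cc_rank 3 a e x 1 \<longrightarrow> card S2 = cc_rank 3 a e x 2 \<longrightarrow> card S3 = cc_rank 3 a e x 3 \<longrightarrow>
          real (Dn a (card S1) (card S2) (card S3)) < s" for Y s
  proof -
    define \<T> where "\<T> = {(S1, S2, S3). S1 \<subseteq> {..<a 1} \<and> S2 \<subseteq> {..<a 2} \<and> S3 \<subseteq> {..<a 3}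
        \<and> real (Dn a (card S1) (card S2) (card S3)) < s}"
    show ?thesis
    proof (rule null_from_cover[where \<T>=\<T>])
      show "S1 \<subseteq> {..<a 1} \<and> S2 \<subseteq> {..<a 2} \<and> S3 \<subseteq> {..<a 3} \<and> real (Dn a (card S1) (card S2) (card S3)) < s"
        if "(S1, S2, S3) \<in> \<T>" for S1 S2 S3 using that unfolding \<T>_def by auto
      show "Y \<subseteq> (\<Union>R. \<Union>T\<in>\<T>. piece e a T R)"
      proof
        fix x assume x: "x \<in> Y"
        then have xV: "x \<in> cc_variety 3 a e" using Y unfolding V_def by auto
        obtain S1 S2 S3 R where H: "S1 \<subseteq> {..<a 1}" "S2 \<subseteq> {..<a 2}" "S3 \<subseteq> {..<a 3}"
          "feasible a (card S1) (card S2) (card S3)"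
          "card S1 = cc_rank 3 a e x 1" "card S2 = cc_rank 3 a e x 2" "card S3 = cc_rank 3 a e x 3"
          "x \<in> piece e a (S1, S2, S3) R"
          using cover_pieces[OF e xV] by blast
        have "real (Dn a (card S1) (card S2) (card S3)) < s"
          using D[OF x, rule_format, of S1 S2 S3] H(4-7) by blast
        then have "(S1, S2, S3) \<in> \<T>" unfolding \<T>_def using H(1-3) by blast
        then show "x \<in> (\<Union>R. \<Union>T\<in>\<T>. piece e a T R)" using H(8) by blast
      qed
    qed
  qed
  have upper: "haus_outer (real k0 + 1) V = 0"
  proof (rule cover)
    show "V \<subseteq> V" by simp
    fix x show "\<forall>(S1::nat set) (S2::nat set) (S3::nat set). feasible a (card S1) (card S2) (card S3) \<longrightarrow>
          card S1 = cc_rank 3 a e x 1 \<longrightarrow> card S2 = cc_rank 3 a e x 2 \<longrightarrow> card S3 = cc_rank 3 a e x 3 \<longrightarrow>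
          real (Dn a (card S1) (card S2) (card S3)) < real k0 + 1"
    proof (intro allI impI)
      fix S1 S2 S3 :: "nat set" assume "feasible a (card S1) (card S2) (card S3)"
      then have "Dn a (card S1) (card S2) (card S3) \<le> k0" by (rule k0_ge)
      then show "real (Dn a (card S1) (card S2) (card S3)) < real k0 + 1" by linarith
    qed
  qed
  have k_ge: "real k0 \<le> k"
  proof -
    have "real k0 + 1 \<in> {s. 0 \<le> s \<and> haus_outer s V = 0}" using upper by simp
    then have ne: "{s. 0 \<le> s \<and> haus_outer s V = 0} \<noteq> {}" by blast
    have "\<forall>s\<in>{s. 0 \<le> s \<and> haus_outer s V = 0}. real k0 \<le> s" using lower by force
    then show ?thesis unfolding k_def hausdorff_dim_def using ne by (intro cInf_greatest) auto
  qed
  have badnull: "haus_outer k Bad = 0"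
  proof (rule cover)
    show "Bad \<subseteq> V" unfolding Bad_def V_def by auto
    fix x assume x: "x \<in> Bad"
    show "\<forall>(S1::nat set) (S2::nat set) (S3::nat set). feasible a (card S1) (card S2) (card S3) \<longrightarrow>
          card S1 = cc_rank 3 a e x 1 \<longrightarrow> card S2 = cc_rank 3 a e x 2 \<longrightarrow> card S3 = cc_rank 3 a e x 3 \<longrightarrow>
          real (Dn a (card S1) (card S2) (card S3)) < k"
    proof (intro allI impI)
      fix S1 S2 S3 :: "nat set"
      assume F: "feasible a (card S1) (card S2) (card S3)" and c: "card S1 = cc_rank 3 a e x 1"
        "card S2 = cc_rank 3 a e x 2" "card S3 = cc_rank 3 a e x 3"
      have bs: "(\<Sum>i\<le>3. betti 3 a e x i) \<noteq> \<bar>int (a 0) - int (a 1) + int (a 2) - int (a 3)\<bar>"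
        using x unfolding Bad_def by auto
      have f: "card S1 \<le> a 0" "card S1 + card S2 \<le> a 1" "card S2 + card S3 \<le> a 2" "card S3 \<le> a 3"
        using F unfolding feasible_def by auto
      have lt: "card S1 + card S2 + card S3 < a 0 + a 2 \<and> card S1 + card S2 + card S3 < a 1 + a 3"
      proof (rule ccontr)
        assume "\<not> ?thesis"
        then have "card S1 + card S2 + card S3 = a 0 + a 2 \<or> card S1 + card S2 + card S3 = a 1 + a 3"
          using f by linarith
        then have "(\<Sum>i\<le>3. betti 3 a e x i) = \<bar>int (a 0) - int (a 1) + int (a 2) - int (a 3)\<bar>"
          unfolding betti_sum c[symmetric] using f by (auto simp: abs_if)
        then show False using bs by simp
      qed
      obtain r1 r2 r3 where "feasible a r1 r2 r3" "Dn a (card S1) (card S2) (card S3) < Dn a r1 r2 r3"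
        using improve[OF a01 F] lt by blast
      then have "Dn a (card S1) (card S2) (card S3) < k0" using k0_ge by (meson order_less_le_trans)
      then show "real (Dn a (card S1) (card S2) (card S3)) < k" using k_ge by linarith
    qed
  qed
  have m: "Bad \<in> sets (hausdorff_measure k)" "emeasure (hausdorff_measure k) Bad = 0"
    using haus_null_measure[OF badnull] by auto
  then have "Bad \<in> null_sets (hausdorff_measure k)" by auto
  then have "(\<integral>\<^sup>+ x. ennreal (f x) * indicator Bad x \<partial>hausdorff_measure k) = 0"
    by (rule nn_integral_null_set)
  then show ?thesis using m(1) unfolding Bad_def k_def V_def by simp
qed


end
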